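(* Let $(k,|\cdot|)$ be a complete non-Archimedean field of characteristic $p>0$ with nontrivial value group. Then for every $n>0$ the Tate algebra $T_n(k)$ is Frobenius split in each of the following cases: (i) $(k,|\cdot|)$ is spherically complete; (ii) $k^{1/p}$ has a dense $k$-subspace $V$ having a countable $k$-basis (in particular if $[k^{1/p}:k]<\infty$); (iii) $|k^\times|$ is not discrete and the norm on $k^{1/p}$ is polar.
   Context: A non-Archimedean field is a field with a multiplicative absolute value satisfying the ultrametric inequality, assumed complete with nontrivial value group $|k^\times|$. $T_n(k)$ is the subring of $k[[X_1,\dots,X_n]]$ of series $\sum_\nu a_\nu X^\nu$ with $|a_\nu|\to0$ as $|\nu|\to\infty$. A ring $R$ of characteristic $p$ is Frobenius split if there is an $R$-linear map $\phi\colon F_{R*}R\to R$ with $\phi(1)=1$, where $F_{R*}R$ is $R$ with module structure $r\cdot x=r^px$. $k$ is spherically complete if every decreasing sequence of closed disks $D_1\supseteq D_2\supseteq\cdots$ in $k$ has nonempty intersection. $k^{1/p}$ carries the unique absolute value extending that of $k$ and is a normed $k$-vector space. A norm $\|\cdot\|$ on a normed $k$-space $E$ is polar if for every $x\in E$ with $\|x\|>1$ there is a $k$-linear functional $f\colon E\to k$ with $|f(y)|\le1$ for all $y$ with $\|y\|\le1$ and $|f(x)|>1$. *)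

theory Defs
  imports Complex_Main "HOL-Library.Countable_Set" "HOL-Algebra.Ring"
begin

definition nonarch_abs :: "('k::field \<Rightarrow> real) \<Rightarrow> bool" where
  "nonarch_abs av \<longleftrightarrow>
     (\<forall>x. av x \<ge> 0) \<and> (\<forall>x. av x = 0 \<longleftrightarrow> x = 0) \<and>
     (\<forall>x y. av (x * y) = av x * av y) \<and>
     (\<forall>x y. av (x + y) \<le> max (av x) (av y))"

definition av_complete :: "('k::field \<Rightarrow> real) \<Rightarrow> bool" where
  "av_complete av \<longleftrightarrow>
     (\<forall>s :: nat \<Rightarrow> 'k.
        (\<forall>e>0. \<exists>N. \<forall>m\<ge>N. \<forall>n\<ge>N. av (s m - s n) < e) \<longrightarrow>
        (\<exists>L. \<forall>e>0. \<exists>N. \<forall>n\<ge>N. av (s n - L) < e))"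

definition nontrivial_value_group :: "('k::field \<Rightarrow> real) \<Rightarrow> bool" where
  "nontrivial_value_group av \<longleftrightarrow> (\<exists>x. x \<noteq> 0 \<and> av x \<noteq> 1)"

definition discrete_value_group :: "('k::field \<Rightarrow> real) \<Rightarrow> bool" where
  "discrete_value_group av \<longleftrightarrow>
     (\<exists>e>0. \<forall>x. x \<noteq> 0 \<and> av x \<noteq> 1 \<longrightarrow> \<bar>av x - 1\<bar> \<ge> e)"

definition closed_disk :: "('k::field \<Rightarrow> real) \<Rightarrow> 'k \<Rightarrow> real \<Rightarrow> 'k set" where
  "closed_disk av c r = {x. av (x - c) \<le> r}"

definition spherically_complete :: "('k::field \<Rightarrow> real) \<Rightarrow> bool" where
  "spherically_complete av \<longleftrightarrow>
     (\<forall>(c :: nat \<Rightarrow> 'k) (r :: nat \<Rightarrow> real).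
        (\<forall>n. r n \<ge> 0) \<and>
        (\<forall>n. closed_disk av (c (Suc n)) (r (Suc n)) \<subseteq> closed_disk av (c n) (r n)) \<longrightarrow>
        (\<Inter>n. closed_disk av (c n) (r n)) \<noteq> {})"

text \<open>k^(1/p) is modelled via the Frobenius isomorphism k^(1/p) -> k, x |-> x^p:
  its underlying additive group is (k,+), an element y of k stands for y^(1/p),
  the scalar action of c in k is  c . y = c^p * y  (since (c y^(1/p))^p = c^p y),
  and the (unique extended) absolute value is  ||y|| = av y powr (1/p).\<close>
definition rootp_smult :: "nat \<Rightarrow> 'k::field \<Rightarrow> 'k \<Rightarrow> 'k" where
  "rootp_smult p c y = c ^ p * y"

definition rootp_norm :: "('k::field \<Rightarrow> real) \<Rightarrow> nat \<Rightarrow> 'k \<Rightarrow> real" where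
  "rootp_norm av p y = av y powr (1 / real p)"

definition rootp_subspace :: "nat \<Rightarrow> 'k::field set \<Rightarrow> bool" where
  "rootp_subspace p V \<longleftrightarrow> 0 \<in> V \<and> (\<forall>x\<in>V. \<forall>y\<in>V. x + y \<in> V) \<and>
     (\<forall>c. \<forall>x\<in>V. rootp_smult p c x \<in> V)"

definition rootp_lin_indep :: "nat \<Rightarrow> 'k::field set \<Rightarrow> bool" where
  "rootp_lin_indep p B \<longleftrightarrow>
     (\<forall>F a. finite F \<and> F \<subseteq> B \<and> (\<Sum>b\<in>F. rootp_smult p (a b) b) = 0 \<longrightarrow> (\<forall>b\<in>F. a b = 0))"

definition rootp_span :: "nat \<Rightarrow> 'k::field set \<Rightarrow> 'k set" where
  "rootp_span p B = {\<Sum>b\<in>F. rootp_smult p (a b) b | F a. finite F \<and> F \<subseteq> B}"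

definition rootp_dense :: "('k::field \<Rightarrow> real) \<Rightarrow> nat \<Rightarrow> 'k set \<Rightarrow> bool" where
  "rootp_dense av p V \<longleftrightarrow> (\<forall>y. \<forall>e>0. \<exists>v\<in>V. rootp_norm av p (y - v) < e)"

definition rootp_dense_countable_basis :: "('k::field \<Rightarrow> real) \<Rightarrow> nat \<Rightarrow> bool" where
  "rootp_dense_countable_basis av p \<longleftrightarrow>
     (\<exists>V B. rootp_subspace p V \<and> rootp_dense av p V \<and>
            countable B \<and> B \<subseteq> V \<and> rootp_lin_indep p B \<and> rootp_span p B = V)"

definition rootp_linear_functional :: "nat \<Rightarrow> ('k::field \<Rightarrow> 'k) \<Rightarrow> bool" where
  "rootp_linear_functional p f \<longleftrightarrow>
     (\<forall>x y. f (x + y) = f x + f y) \<and> (\<forall>c x. f (rootp_smult p c x) = c * f x)"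

definition rootp_polar :: "('k::field \<Rightarrow> real) \<Rightarrow> nat \<Rightarrow> bool" where
  "rootp_polar av p \<longleftrightarrow>
     (\<forall>x. rootp_norm av p x > 1 \<longrightarrow>
        (\<exists>f. rootp_linear_functional p f \<and>
             (\<forall>y. rootp_norm av p y \<le> 1 \<longrightarrow> av (f y) \<le> 1) \<and> av (f x) > 1))"

text \<open>A formal power series is a coefficient function (nat => nat) => 'k vanishing off
  the n-multi-indices.  T_n(k) consists of those with coefficients tending to 0,
  i.e. for each e > 0 only finitely many coefficients have absolute value >= e.\<close>
definition multi_index :: "nat \<Rightarrow> (nat \<Rightarrow> nat) \<Rightarrow> bool" where
  "multi_index n \<nu> \<longleftrightarrow> (\<forall>i\<ge>n. \<nu> i = 0)"

definition tate_carrier :: "('k::field \<Rightarrow> real) \<Rightarrow> nat \<Rightarrow> ((nat \<Rightarrow> nat) \<Rightarrow> 'k) set" where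
  "tate_carrier av n = {f. (\<forall>\<nu>. \<not> multi_index n \<nu> \<longrightarrow> f \<nu> = 0) \<and>
                          (\<forall>e>0. finite {\<nu>. av (f \<nu>) \<ge> e})}"

definition ps_mult :: "((nat \<Rightarrow> nat) \<Rightarrow> 'k::field) \<Rightarrow> ((nat \<Rightarrow> nat) \<Rightarrow> 'k) \<Rightarrow> (nat \<Rightarrow> nat) \<Rightarrow> 'k" where
  "ps_mult f g \<nu> = (\<Sum>\<mu>\<in>{\<mu>. \<forall>i. \<mu> i \<le> \<nu> i}. f \<mu> * g (\<lambda>i. \<nu> i - \<mu> i))"

definition ps_one :: "(nat \<Rightarrow> nat) \<Rightarrow> 'k::field" where
  "ps_one \<nu> = (if \<nu> = (\<lambda>_. 0) then 1 else 0)"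

definition tate_algebra :: "('k::field \<Rightarrow> real) \<Rightarrow> nat \<Rightarrow> ((nat \<Rightarrow> nat) \<Rightarrow> 'k) ring" where
  "tate_algebra av n =
     \<lparr>carrier = tate_carrier av n, monoid.mult = ps_mult, one = ps_one,
      zero = (\<lambda>_. 0), add = (\<lambda>f g \<nu>. f \<nu> + g \<nu>)\<rparr>"

text \<open>R (of characteristic p) is Frobenius split if there is an R-linear map
  phi : F_* R -> R with phi 1 = 1, where r . x = r^p x on F_* R.\<close>
definition frobenius_split :: "('a, 'b) ring_scheme \<Rightarrow> nat \<Rightarrow> bool" where
  "frobenius_split R p \<longleftrightarrow>
     (\<exists>\<phi> \<in> carrier R \<rightarrow> carrier R.
        (\<forall>x\<in>carrier R. \<forall>y\<in>carrier R. \<phi> (x \<oplus>\<^bsub>R\<^esub> y) = \<phi> x \<oplus>\<^bsub>R\<^esub> \<phi> y) \<and>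
        (\<forall>r\<in>carrier R. \<forall>x\<in>carrier R.
            \<phi> ((r [^]\<^bsub>R\<^esub> p) \<otimes>\<^bsub>R\<^esub> x) = r \<otimes>\<^bsub>R\<^esub> \<phi> x) \<and>
        \<phi> \<one>\<^bsub>R\<^esub> = \<one>\<^bsub>R\<^esub>)"

end

theory Submission
  imports Defs "HOL-Computational_Algebra.Primes"
begin

definition fsupp :: "(nat \<Rightarrow> nat) \<Rightarrow> bool" where
  "fsupp \<nu> \<longleftrightarrow> finite {i. \<nu> i \<noteq> 0}"

definition box :: "(nat \<Rightarrow> nat) \<Rightarrow> (nat \<Rightarrow> nat) set" where
  "box \<nu> = {\<mu>. \<forall>i. \<mu> i \<le> \<nu> i}"

lemma finite_box: assumes "fsupp \<nu>" shows "finite (box \<nu>)"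
proof -
  obtain N where N: "\<forall>i\<ge>N. \<nu> i = 0"
  proof -
    from finite_nat_bounded[of "{i. \<nu> i \<noteq> 0}"] assms obtain N where "{i. \<nu> i \<noteq> 0} \<subseteq> {..<N}"
      unfolding fsupp_def by blast
    then have "\<forall>i\<ge>N. \<nu> i = 0" by (auto simp: subset_iff not_less[symmetric])
    then show ?thesis using that by blast
  qed
  let ?g = "\<lambda>f i. if i < N then f i else (0::nat)"
  have "box \<nu> \<subseteq> ?g ` PiE {..<N} (\<lambda>i. {..\<nu> i})"
  proof
    fix \<mu> assume m: "\<mu> \<in> box \<nu>"
    then have m1: "\<And>i. \<mu> i \<le> \<nu> i" by (simp add: box_def)
    have "\<mu> = ?g (restrict \<mu> {..<N})"
    proof
      fix i show "\<mu> i = ?g (restrict \<mu> {..<N}) i"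
      proof (cases "i < N")
        case False
        then have "\<nu> i = 0" using N by simp
        then show ?thesis using m1[of i] False by simp
      qed simp
    qed
    moreover have "restrict \<mu> {..<N} \<in> PiE {..<N} (\<lambda>i. {..\<nu> i})"
      using m1 by simp
    ultimately show "\<mu> \<in> ?g ` PiE {..<N} (\<lambda>i. {..\<nu> i})" by (rule image_eqI)
  qed
  moreover have "finite (?g ` PiE {..<N} (\<lambda>i. {..\<nu> i}))"
    by (rule finite_imageI, rule finite_PiE) simp_all
  ultimately show ?thesis by (rule finite_subset)
qed

lemma box_infinite: assumes "\<not> fsupp \<nu>" shows "infinite (box \<nu>)"
proof
  assume "finite (box \<nu>)"
  have "{i. \<nu> i \<noteq> 0} \<subseteq> (\<lambda>i. (\<lambda>j. if j = i then \<nu> i else 0)) -` box \<nu> \<inter> {i. \<nu> i \<noteq> 0}"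
    by (auto simp: box_def)
  moreover have "inj_on (\<lambda>i. (\<lambda>j. if j = i then \<nu> i else 0)) {i. \<nu> i \<noteq> 0}"
  proof (rule inj_onI)
    fix i i' assume "i \<in> {i. \<nu> i \<noteq> 0}" "(\<lambda>j. if j = i then \<nu> i else 0) = (\<lambda>j. if j = i' then \<nu> i' else 0)"
    from this(2) have "(if i = i then \<nu> i else 0) = (if i = i' then \<nu> i' else 0)" by (rule fun_cong)
    with \<open>i \<in> {i. \<nu> i \<noteq> 0}\<close> show "i = i'" by (cases "i = i'") auto
  qed
  ultimately have "finite {i. \<nu> i \<noteq> 0}"
    using finite_vimage_IntI[OF \<open>finite (box \<nu>)\<close>] by (meson finite_subset)
  then show False using assms by (simp add: fsupp_def)
qed

lemma ps_mult_box: "ps_mult f g \<nu> = (\<Sum>\<mu>\<in>box \<nu>. f \<mu> * g (\<lambda>i. \<nu> i - \<mu> i))"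
  by (simp add: ps_mult_def box_def)

lemma ps_mult_nfsupp: "\<not> fsupp \<nu> \<Longrightarrow> ps_mult f g \<nu> = 0"
  using box_infinite by (simp add: ps_mult_box)

lemma fsupp_le: "fsupp \<nu> \<Longrightarrow> \<mu> \<in> box \<nu> \<Longrightarrow> fsupp \<mu>"
  unfolding fsupp_def box_def
proof (rule finite_subset[of _ "{i. \<nu> i \<noteq> 0}"])
  assume "\<mu> \<in> {\<mu>. \<forall>i. \<mu> i \<le> \<nu> i}"
  then have "\<And>i. \<mu> i \<le> \<nu> i" by simp
  then show "{i. \<mu> i \<noteq> 0} \<subseteq> {i. \<nu> i \<noteq> 0}" by (metis (mono_tags) Collect_mono le_zero_eq)
qed

lemma box_dd: "\<mu> \<in> box \<nu> \<Longrightarrow> (\<lambda>i. \<nu> i - (\<nu> i - \<mu> i)) = \<mu>"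
  unfolding box_def by (rule ext) simp

lemma box_d: "(\<lambda>i. \<nu> i - \<mu> i) \<in> box \<nu>"
  unfolding box_def by simp

lemma ps_mult_comm: "ps_mult f g \<nu> = ps_mult g f \<nu>"
proof (cases "fsupp \<nu>")
  case True
  show ?thesis unfolding ps_mult_box
    by (rule sum.reindex_bij_witness[where i="\<lambda>\<mu> i. \<nu> i - \<mu> i" and j="\<lambda>\<mu> i. \<nu> i - \<mu> i"])
      (simp_all add: box_dd box_d mult.commute)
qed (simp add: ps_mult_nfsupp)

lemma ps_mult_assoc: "ps_mult (ps_mult f g) h \<nu> = ps_mult f (ps_mult g h) \<nu>"
proof (cases "fsupp \<nu>")
  case True
  have fb: "finite (box \<nu>)" using True finite_box by blast
  have fb2: "\<And>\<mu>. \<mu> \<in> box \<nu> \<Longrightarrow> finite (box \<mu>)"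
    using True fsupp_le finite_box by blast
  have fb3: "\<And>\<alpha>. \<alpha> \<in> box \<nu> \<Longrightarrow> finite (box (\<lambda>i. \<nu> i - \<alpha> i))"
    using True fsupp_le finite_box box_d by blast
  have "ps_mult (ps_mult f g) h \<nu> = (\<Sum>\<mu>\<in>box \<nu>. \<Sum>\<alpha>\<in>box \<mu>. f \<alpha> * g (\<lambda>i. \<mu> i - \<alpha> i) * h (\<lambda>i. \<nu> i - \<mu> i))"
    unfolding ps_mult_box by (simp add: sum_distrib_right)
  also have "\<dots> = (\<Sum>(\<mu>,\<alpha>)\<in>Sigma (box \<nu>) box. f \<alpha> * g (\<lambda>i. \<mu> i - \<alpha> i) * h (\<lambda>i. \<nu> i - \<mu> i))"
    by (rule sum.Sigma[OF fb]) (use fb2 in blast)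
  also have "\<dots> = (\<Sum>(\<alpha>,\<beta>)\<in>Sigma (box \<nu>) (\<lambda>\<alpha>. box (\<lambda>i. \<nu> i - \<alpha> i)). f \<alpha> * (g \<beta> * h (\<lambda>i. \<nu> i - \<alpha> i - \<beta> i)))"
  proof (rule sum.reindex_bij_witness[where i="\<lambda>(\<alpha>,\<beta>). (\<lambda>i. \<alpha> i + \<beta> i, \<alpha>)" and j="\<lambda>(\<mu>,\<alpha>). (\<alpha>, \<lambda>i. \<mu> i - \<alpha> i)"])
    fix b assume "b \<in> Sigma (box \<nu>) (\<lambda>\<alpha>. box (\<lambda>i. \<nu> i - \<alpha> i))"
    then obtain \<alpha> \<beta> where a: "b = (\<alpha>,\<beta>)" "\<forall>i. \<alpha> i \<le> \<nu> i" "\<forall>i. \<beta> i \<le> \<nu> i - \<alpha> i"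
      by (auto simp: box_def)
    have e1: "(\<lambda>i. \<alpha> i + \<beta> i - \<alpha> i) = \<beta>" by auto
    show "(case (case b of (\<alpha>, \<beta>) \<Rightarrow> (\<lambda>i. \<alpha> i + \<beta> i, \<alpha>)) of (\<mu>, \<alpha>) \<Rightarrow> (\<alpha>, \<lambda>i. \<mu> i - \<alpha> i)) = b"
      using a e1 by simp
    show "(case b of (\<alpha>, \<beta>) \<Rightarrow> (\<lambda>i. \<alpha> i + \<beta> i, \<alpha>)) \<in> Sigma (box \<nu>) box"
      using a unfolding box_def mem_Sigma_iff split by (simp add: le_diff_conv2 add.commute)
  next
    fix a assume "a \<in> Sigma (box \<nu>) box"
    then obtain \<mu> \<alpha> where b: "a = (\<mu>,\<alpha>)" "\<forall>i. \<mu> i \<le> \<nu> i" "\<forall>i. \<alpha> i \<le> \<mu> i"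
      by (auto simp: box_def)
    have e1: "(\<lambda>i. \<alpha> i + (\<mu> i - \<alpha> i)) = \<mu>" using b by auto
    have e2: "(\<lambda>i. \<nu> i - \<alpha> i - (\<mu> i - \<alpha> i)) = (\<lambda>i. \<nu> i - \<mu> i)" using b by auto
    show "(case (case a of (\<mu>, \<alpha>) \<Rightarrow> (\<alpha>, \<lambda>i. \<mu> i - \<alpha> i)) of (\<alpha>, \<beta>) \<Rightarrow> (\<lambda>i. \<alpha> i + \<beta> i, \<alpha>)) = a"
      using b e1 by simp
    show "(case a of (\<mu>, \<alpha>) \<Rightarrow> (\<alpha>, \<lambda>i. \<mu> i - \<alpha> i)) \<in> Sigma (box \<nu>) (\<lambda>\<alpha>. box (\<lambda>i. \<nu> i - \<alpha> i))"
      using b unfolding box_def mem_Sigma_iff split by (simp add: diff_le_mono) (meson le_trans)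
    show "(case (case a of (\<mu>, \<alpha>) \<Rightarrow> (\<alpha>, \<lambda>i. \<mu> i - \<alpha> i)) of (\<alpha>, \<beta>) \<Rightarrow> f \<alpha> * (g \<beta> * h (\<lambda>i. \<nu> i - \<alpha> i - \<beta> i))) =
         (case a of (\<mu>, \<alpha>) \<Rightarrow> f \<alpha> * g (\<lambda>i. \<mu> i - \<alpha> i) * h (\<lambda>i. \<nu> i - \<mu> i))"
      using b e2 by (simp add: mult.assoc)
  qed
  also have "\<dots> = (\<Sum>\<alpha>\<in>box \<nu>. \<Sum>\<beta>\<in>box (\<lambda>i. \<nu> i - \<alpha> i). f \<alpha> * (g \<beta> * h (\<lambda>i. \<nu> i - \<alpha> i - \<beta> i)))"
    by (rule sum.Sigma[OF fb, symmetric]) (use fb3 in blast)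
  also have "\<dots> = ps_mult f (ps_mult g h) \<nu>"
    unfolding ps_mult_box by (simp add: sum_distrib_left)
  finally show ?thesis .
qed (simp add: ps_mult_nfsupp)

lemma fsupp_zero: "fsupp (\<lambda>_. 0)" by (simp add: fsupp_def)

lemma ps_one_nfsupp: "\<not> fsupp \<nu> \<Longrightarrow> ps_one \<nu> = 0"
  using fsupp_zero by (auto simp: ps_one_def)

lemma zero_in_box: "(\<lambda>_. 0) \<in> box \<nu>" by (simp add: box_def)

lemma ps_one_mult: assumes "fsupp \<nu>" shows "ps_mult ps_one f \<nu> = f \<nu>"
proof -
  have "ps_mult ps_one f \<nu> = (\<Sum>\<mu>\<in>box \<nu>. if \<mu> = (\<lambda>_. 0) then f (\<lambda>i. \<nu> i - \<mu> i) else 0)"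
    unfolding ps_mult_box ps_one_def by (rule sum.cong) auto
  also have "\<dots> = f \<nu>"
    using finite_box[OF assms] zero_in_box by (simp add: sum.delta)
  finally show ?thesis .
qed

typedef (overloaded) 'k ser = "{f :: (nat \<Rightarrow> nat) \<Rightarrow> 'k::field. \<forall>\<nu>. \<not> fsupp \<nu> \<longrightarrow> f \<nu> = 0}"
  by (rule exI[of _ "\<lambda>_. 0"]) auto

setup_lifting type_definition_ser

instantiation ser :: (field) comm_ring_1
begin
lift_definition zero_ser :: "'a ser" is "\<lambda>_. 0" by simp
lift_definition one_ser :: "'a ser" is "ps_one" by (simp add: ps_one_nfsupp)
lift_definition plus_ser :: "'a ser \<Rightarrow> 'a ser \<Rightarrow> 'a ser" is "\<lambda>f g \<nu>. f \<nu> + g \<nu>" by simp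
lift_definition minus_ser :: "'a ser \<Rightarrow> 'a ser \<Rightarrow> 'a ser" is "\<lambda>f g \<nu>. f \<nu> - g \<nu>" by simp
lift_definition uminus_ser :: "'a ser \<Rightarrow> 'a ser" is "\<lambda>f \<nu>. - f \<nu>" by simp
lift_definition times_ser :: "'a ser \<Rightarrow> 'a ser \<Rightarrow> 'a ser" is "ps_mult" by (simp add: ps_mult_nfsupp)
instance
proof
  fix a b c :: "'a ser"
  show "a * b * c = a * (b * c)" by transfer (simp add: ps_mult_assoc fun_eq_iff)
  show "a * b = b * a" by transfer (simp add: ps_mult_comm fun_eq_iff)
  show "1 * a = a"
  proof transfer
    fix a :: "(nat \<Rightarrow> nat) \<Rightarrow> 'a" assume a: "\<forall>\<nu>. \<not> fsupp \<nu> \<longrightarrow> a \<nu> = 0"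
    show "ps_mult ps_one a = a"
    proof
      fix \<nu> show "ps_mult ps_one a \<nu> = a \<nu>"
        using a by (cases "fsupp \<nu>") (simp_all add: ps_one_mult ps_mult_nfsupp)
    qed
  qed
  show "(a + b) * c = a * c + b * c"
    by transfer (simp add: fun_eq_iff ps_mult_box sum.distrib distrib_right)
  show "a + b + c = a + (b + c)" by transfer (simp add: add.assoc)
  show "a + b = b + a" by transfer (simp add: add.commute)
  show "0 + a = a" by transfer simp
  show "- a + a = 0" by transfer simp
  show "a - b = a + - b" by transfer simp
  show "(0::'a ser) \<noteq> 1"
  proof transfer
    have "ps_one (\<lambda>_. 0) = (1::'a)" by (simp add: ps_one_def)
    then show "(\<lambda>_. 0::'a) \<noteq> ps_one" by (metis zero_neq_one)
  qed
qed
end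

lemma Rep_ser_prop: "\<not> fsupp \<nu> \<Longrightarrow> Rep_ser x \<nu> = 0"
  using Rep_ser by auto

lemma Rep_ser_sum: "Rep_ser (sum f A) \<nu> = (\<Sum>i\<in>A. Rep_ser (f i) \<nu>)"
  by (induction A rule: infinite_finite_induct) (simp_all add: zero_ser.rep_eq plus_ser.rep_eq)

lemma Rep_ser_mult: "Rep_ser (x * y) = ps_mult (Rep_ser x) (Rep_ser y)"
  by (simp add: times_ser.rep_eq)

lift_definition mono :: "'k::field \<Rightarrow> (nat \<Rightarrow> nat) \<Rightarrow> 'k ser" is
  "\<lambda>c \<mu> \<nu>. if fsupp \<mu> \<and> \<nu> = \<mu> then c else 0" by auto

lemma mono_add: "mono a \<mu> + mono b \<mu> = mono (a + b) \<mu>"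
  by transfer auto

lemma one_ser_mono: "(1::'k::field ser) = mono 1 (\<lambda>_. 0)"
  by transfer (auto simp: fun_eq_iff ps_one_def fsupp_zero)

lemma of_nat_ser: "(of_nat m :: 'k::field ser) = mono (of_nat m) (\<lambda>_. 0)"
proof (induction m)
  case 0 then show ?case by (rule Rep_ser_inject[THEN iffD1]) (simp add: zero_ser.rep_eq mono.rep_eq fun_eq_iff)
next
  case (Suc m) then show ?case by (simp add: one_ser_mono mono_add)
qed

lemma CHAR_ser: "CHAR('k::field ser) = CHAR('k)"
proof (rule CHAR_eqI)
  have "Rep_ser (of_nat CHAR('k) :: 'k ser) = (\<lambda>_. 0)"
    unfolding of_nat_ser by (simp add: mono.rep_eq fun_eq_iff)
  then show "of_nat CHAR('k) = (0::'k ser)"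
    by (metis Rep_ser_inverse zero_ser_def)
next
  fix x assume "of_nat x = (0::'k ser)"
  then have "Rep_ser (of_nat x :: 'k ser) (\<lambda>_. 0) = 0" by (simp add: zero_ser.rep_eq)
  then have "(of_nat x :: 'k) = 0" unfolding of_nat_ser by (simp add: mono.rep_eq fsupp_zero)
  then show "CHAR('k) dvd x" by (simp add: of_nat_eq_0_iff_char_dvd)
qed

lemma fsupp_add: "fsupp \<alpha> \<Longrightarrow> fsupp \<beta> \<Longrightarrow> fsupp (\<lambda>i. \<alpha> i + \<beta> i)"
  unfolding fsupp_def by (rule finite_subset[of _ "{i. \<alpha> i \<noteq> 0} \<union> {i. \<beta> i \<noteq> 0}"]) auto

lemma fsupp_smul: "fsupp \<alpha> \<Longrightarrow> fsupp (\<lambda>i. m * \<alpha> i)"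
  unfolding fsupp_def by (rule finite_subset[of _ "{i. \<alpha> i \<noteq> 0}"]) auto

lemma mono_mult:
  assumes "fsupp \<alpha>" "fsupp \<beta>"
  shows "mono a \<alpha> * mono b \<beta> = mono (a * b) (\<lambda>i. \<alpha> i + \<beta> i)"
proof (rule Rep_ser_inject[THEN iffD1], rule ext)
  fix \<nu>
  show "Rep_ser (mono a \<alpha> * mono b \<beta>) \<nu> = Rep_ser (mono (a * b) (\<lambda>i. \<alpha> i + \<beta> i)) \<nu>"
  proof (cases "fsupp \<nu>")
    case False then show ?thesis by (simp add: Rep_ser_prop)
  next
    case True
    have "Rep_ser (mono a \<alpha> * mono b \<beta>) \<nu> =
      (\<Sum>\<mu>\<in>box \<nu>. if \<mu> = \<alpha> then (if (\<lambda>i. \<nu> i - \<alpha> i) = \<beta> then a * b else 0) else 0)"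
      unfolding Rep_ser_mult ps_mult_box mono.rep_eq using assms by (intro sum.cong) auto
    also have "\<dots> = (if \<alpha> \<in> box \<nu> \<and> (\<lambda>i. \<nu> i - \<alpha> i) = \<beta> then a * b else 0)"
      using finite_box[OF True] by (simp add: sum.delta)
    also have "\<dots> = (if \<nu> = (\<lambda>i. \<alpha> i + \<beta> i) then a * b else 0)"
    proof -
      have "(\<alpha> \<in> box \<nu> \<and> (\<lambda>i. \<nu> i - \<alpha> i) = \<beta>) \<longleftrightarrow> \<nu> = (\<lambda>i. \<alpha> i + \<beta> i)"
      proof
        assume h: "\<alpha> \<in> box \<nu> \<and> (\<lambda>i. \<nu> i - \<alpha> i) = \<beta>"
        show "\<nu> = (\<lambda>i. \<alpha> i + \<beta> i)"
        proof
          fix i from h have "\<alpha> i \<le> \<nu> i" "\<nu> i - \<alpha> i = \<beta> i" by (auto simp: box_def dest: fun_cong[of _ _ i])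
          then show "\<nu> i = \<alpha> i + \<beta> i" by simp
        qed
      next
        assume "\<nu> = (\<lambda>i. \<alpha> i + \<beta> i)"
        then show "\<alpha> \<in> box \<nu> \<and> (\<lambda>i. \<nu> i - \<alpha> i) = \<beta>" by (simp add: box_def)
      qed
      then show ?thesis by simp
    qed
    finally show ?thesis unfolding mono.rep_eq using fsupp_add[OF assms] by simp
  qed
qed

lemma mono_pow:
  assumes "fsupp \<alpha>"
  shows "mono a \<alpha> ^ m = mono (a ^ m) (\<lambda>i. m * \<alpha> i)"
proof (induction m)
  case 0 then show ?case by (simp add: one_ser_mono)
next
  case (Suc m)
  have "mono a \<alpha> ^ Suc m = mono a \<alpha> * mono (a ^ m) (\<lambda>i. m * \<alpha> i)" by (simp add: Suc)
  also have "\<dots> = mono (a ^ Suc m) (\<lambda>i. Suc m * \<alpha> i)"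
    by (subst mono_mult) (simp_all add: assms fsupp_smul)
  finally show ?case .
qed

lemma box_trans: "\<nu>' \<in> box \<nu> \<Longrightarrow> \<mu> \<in> box \<nu>' \<Longrightarrow> \<mu> \<in> box \<nu>"
  unfolding box_def using le_trans by blast

lemma box_diff_trans: "\<nu>' \<in> box \<nu> \<Longrightarrow> (\<lambda>i. \<nu>' i - \<mu> i) \<in> box \<nu>"
  unfolding box_def using le_trans diff_le_self by blast

lemma self_in_box: "\<nu> \<in> box \<nu>" by (simp add: box_def)

lemma pow_local:
  assumes "\<forall>\<mu>\<in>box \<nu>. Rep_ser x \<mu> = Rep_ser y \<mu>"
  shows "\<forall>\<nu>'\<in>box \<nu>. Rep_ser (x ^ m) \<nu>' = Rep_ser (y ^ m) \<nu>'"
proof (induction m)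
  case 0 then show ?case by simp
next
  case (Suc m)
  show ?case
  proof
    fix \<nu>' assume h: "\<nu>' \<in> box \<nu>"
    show "Rep_ser (x ^ Suc m) \<nu>' = Rep_ser (y ^ Suc m) \<nu>'"
      unfolding power_Suc Rep_ser_mult ps_mult_box
      by (rule sum.cong[OF refl]) (use assms Suc h box_trans box_diff_trans in metis)
  qed
qed

definition trunc :: "(nat \<Rightarrow> nat) \<Rightarrow> 'k::field ser \<Rightarrow> 'k ser" where
  "trunc \<nu> x = (\<Sum>\<mu>\<in>box \<nu>. mono (Rep_ser x \<mu>) \<mu>)"

lemma Rep_trunc:
  assumes "fsupp \<nu>"
  shows "Rep_ser (trunc \<nu> x) \<nu>' = (if \<nu>' \<in> box \<nu> then Rep_ser x \<nu>' else 0)"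
proof -
  have "Rep_ser (trunc \<nu> x) \<nu>' = (\<Sum>\<mu>\<in>box \<nu>. if \<nu>' = \<mu> then Rep_ser x \<mu> else 0)"
    unfolding trunc_def Rep_ser_sum mono.rep_eq
    by (rule sum.cong[OF refl]) (use assms fsupp_le in auto)
  also have "\<dots> = (if \<nu>' \<in> box \<nu> then Rep_ser x \<nu>' else 0)"
    using finite_box[OF assms] by (simp add: sum.delta)
  finally show ?thesis .
qed

lemma pow_char:
  assumes p: "CHAR('k::field) = p" "p > 0"
  shows "Rep_ser ((x::'k ser) ^ p) \<nu> = (if \<forall>i. p dvd \<nu> i then Rep_ser x (\<lambda>i. \<nu> i div p) ^ p else 0)"
proof (cases "fsupp \<nu>")
  case True
  have "prime CHAR('k)" using p prime_CHAR_semidom[where 'a='k] by simp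
  then have pr: "prime CHAR('k ser)" by (simp add: CHAR_ser)
  have pc: "CHAR('k ser) = p" using p by (simp add: CHAR_ser)
  have "Rep_ser (x ^ p) \<nu> = Rep_ser (trunc \<nu> x ^ p) \<nu>"
  proof -
    have "\<forall>\<mu>\<in>box \<nu>. Rep_ser x \<mu> = Rep_ser (trunc \<nu> x) \<mu>"
    proof
      fix \<mu> assume "\<mu> \<in> box \<nu>" then show "Rep_ser x \<mu> = Rep_ser (trunc \<nu> x) \<mu>"
        using Rep_trunc[OF True, of x \<mu>] by simp
    qed
    then show ?thesis using pow_local[of \<nu> x "trunc \<nu> x" p] self_in_box by blast
  qed
  also have "trunc \<nu> x ^ p = (\<Sum>\<mu>\<in>box \<nu>. mono (Rep_ser x \<mu>) \<mu> ^ p)"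
    unfolding trunc_def by (rule freshmans_dream_sum[OF pr pc[symmetric]])
  also have "\<dots> = (\<Sum>\<mu>\<in>box \<nu>. mono (Rep_ser x \<mu> ^ p) (\<lambda>i. p * \<mu> i))"
    by (rule sum.cong[OF refl]) (use True fsupp_le mono_pow in blast)
  finally have "Rep_ser (x ^ p) \<nu> = (\<Sum>\<mu>\<in>box \<nu>. if \<nu> = (\<lambda>i. p * \<mu> i) then Rep_ser x \<mu> ^ p else 0)"
    unfolding Rep_ser_sum mono.rep_eq
    by (simp cong: sum.cong add: fsupp_smul fsupp_le[OF True])
  also have "\<dots> = (if \<forall>i. p dvd \<nu> i then Rep_ser x (\<lambda>i. \<nu> i div p) ^ p else 0)"
  proof (cases "\<forall>i. p dvd \<nu> i")
    case True
    let ?m = "\<lambda>i. \<nu> i div p"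
    have "\<And>\<mu>. (\<nu> = (\<lambda>i. p * \<mu> i)) = (\<mu> = ?m)"
    proof
      fix \<mu> assume "\<nu> = (\<lambda>i. p * \<mu> i)" then show "\<mu> = ?m" using p by auto
    next
      fix \<mu> assume "\<mu> = ?m" then show "\<nu> = (\<lambda>i. p * \<mu> i)" using True by auto
    qed
    moreover have "?m \<in> box \<nu>" by (simp add: box_def)
    ultimately show ?thesis using True finite_box[OF \<open>fsupp \<nu>\<close>]
      by (simp add: sum.delta')
  next
    case False
    then have "\<And>\<mu>. \<nu> \<noteq> (\<lambda>i. p * \<mu> i)" by auto
    then show ?thesis using False by (simp del: not_all)
  qed
  finally show ?thesis .
next
  case False
  have "\<not> fsupp (\<lambda>i. \<nu> i div p)" if "\<forall>i. p dvd \<nu> i"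
  proof
    assume "fsupp (\<lambda>i. \<nu> i div p)"
    then have "fsupp (\<lambda>i. p * (\<nu> i div p))" by (rule fsupp_smul)
    moreover have "(\<lambda>i. p * (\<nu> i div p)) = \<nu>" using that by auto
    ultimately show False using False by simp
  qed
  then show ?thesis using False p by (simp add: Rep_ser_prop)
qed

definition good_lam :: "('k::field \<Rightarrow> real) \<Rightarrow> nat \<Rightarrow> ('k \<Rightarrow> 'k) \<Rightarrow> bool" where
  "good_lam av p lam \<longleftrightarrow> (\<forall>x y. lam (x + y) = lam x + lam y) \<and> (\<forall>c y. lam (c ^ p * y) = c * lam y)
     \<and> lam 1 = 1 \<and> (\<exists>C>0. \<forall>y. av (lam y) ^ p \<le> C * av y)"

lemma multi_fsupp: "multi_index n \<nu> \<Longrightarrow> fsupp \<nu>"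
  unfolding multi_index_def fsupp_def
proof (rule finite_subset[of _ "{..<n}"])
  assume h: "\<forall>i\<ge>n. \<nu> i = 0"
  show "{i. \<nu> i \<noteq> 0} \<subseteq> {..<n}"
  proof
    fix i assume "i \<in> {i. \<nu> i \<noteq> 0}" then have "\<not> n \<le> i" using h by auto
    then show "i \<in> {..<n}" by simp
  qed
qed simp

lemma tate_pow:
  assumes "\<forall>\<nu>. \<not> fsupp \<nu> \<longrightarrow> r \<nu> = 0"
  shows "r [^]\<^bsub>tate_algebra av n\<^esub> (m::nat) = Rep_ser (Abs_ser r ^ m)"
proof (induction m)
  case 0 then show ?case by (simp add: nat_pow_def tate_algebra_def one_ser.rep_eq)
next
  case (Suc m)
  have "r [^]\<^bsub>tate_algebra av n\<^esub> Suc m = ps_mult (r [^]\<^bsub>tate_algebra av n\<^esub> m) r"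
    by (simp add: nat_pow_def tate_algebra_def)
  also have "\<dots> = Rep_ser (Abs_ser r ^ m * Abs_ser r)"
    using assms by (simp add: Suc Rep_ser_mult Abs_ser_inverse)
  finally show ?case by (simp add: mult.commute)
qed

lemma lam_zero: "good_lam av p lam \<Longrightarrow> lam 0 = 0"
proof -
  assume "good_lam av p lam"
  then have "lam (0 + 0) = lam 0 + lam 0" unfolding good_lam_def by blast
  then have "lam 0 = lam 0 + lam 0" by simp
  then show "lam 0 = 0" by (rule add_cancel_right_right[THEN iffD1])
qed

lemma lam_sum: "good_lam av p lam \<Longrightarrow> lam (sum f A) = (\<Sum>a\<in>A. lam (f a))"
  by (induction A rule: infinite_finite_induct) (simp_all add: lam_zero, simp add: good_lam_def)

lemma av_basic:
  assumes "nonarch_abs av"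
  shows "av 0 = 0" "av 1 = 1" "\<And>x. av (- x) = av x" "\<And>x y. av (x * y) = av x * av y"
    "\<And>x. av x \<ge> 0" "\<And>x. av x = 0 \<longleftrightarrow> x = 0" "\<And>x y. av (x + y) \<le> max (av x) (av y)"
    "\<And>x n. av (x ^ n) = av x ^ n"
proof -
  show a0: "av 0 = 0" using assms unfolding nonarch_abs_def by auto
  have m: "\<And>x y. av (x * y) = av x * av y" using assms unfolding nonarch_abs_def by auto
  have nz: "av 1 \<noteq> 0" using assms unfolding nonarch_abs_def by auto
  show a1: "av 1 = 1" using m[of 1 1] nz by simp
  have ge: "\<And>x. av x \<ge> 0" using assms unfolding nonarch_abs_def by auto
  have "av (-1) * av (-1) = 1" using m[of "-1" "-1"] a1 by simp
  then have "(av (-1) - 1) * (av (-1) + 1) = 0" by (simp add: algebra_simps)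
  moreover have "av (-1) + 1 \<noteq> 0" using ge[of "-1"] by simp
  ultimately have "av (-1) = 1" by simp
  then show "\<And>x. av (- x) = av x" using m by (metis mult_1 mult_minus_left)
  show "\<And>x y. av (x * y) = av x * av y" by (rule m)
  show "\<And>x. av x \<ge> 0" by (rule ge)
  show "\<And>x. av x = 0 \<longleftrightarrow> x = 0" using assms unfolding nonarch_abs_def by auto
  show "\<And>x y. av (x + y) \<le> max (av x) (av y)" using assms unfolding nonarch_abs_def by auto
  show "\<And>x n. av (x ^ n) = av x ^ n"
  proof -
    fix x :: 'a and n show "av (x ^ n) = av x ^ n" by (induction n) (simp_all add: a1 m)
  qed
qed

theorem split_from_lam:
  fixes av :: "'k::field \<Rightarrow> real"
  assumes av: "nonarch_abs av" and p: "CHAR('k) = p" "p > 0" and lam: "good_lam av p lam"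
  shows "frobenius_split (tate_algebra av n) p"
proof -
  let ?R = "tate_algebra av n"
  define mp where "mp = (\<lambda>(\<mu>::nat \<Rightarrow> nat) i. p * \<mu> i)"
  define \<phi> where "\<phi> = (\<lambda>x \<mu>. if multi_index n \<mu> then lam (x (mp \<mu>)) else (0::'k))"
  have carr: "carrier ?R = tate_carrier av n" by (simp add: tate_algebra_def)
  have inj_mp: "inj mp" unfolding mp_def using p by (auto simp: inj_def fun_eq_iff)
  obtain C where C: "C > 0" "\<And>y. av (lam y) ^ p \<le> C * av y" using lam unfolding good_lam_def by blast
  have ladd: "\<And>x y. lam (x + y) = lam x + lam y" and lsc: "\<And>c y. lam (c ^ p * y) = c * lam y"
    and l1: "lam 1 = 1" using lam unfolding good_lam_def by auto
  have tc_fs: "\<And>x \<nu>. x \<in> tate_carrier av n \<Longrightarrow> \<not> fsupp \<nu> \<Longrightarrow> x \<nu> = 0"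
    unfolding tate_carrier_def using multi_fsupp by blast
  have mp_multi: "\<And>\<mu>. multi_index n (mp \<mu>) \<longleftrightarrow> multi_index n \<mu>"
    unfolding mp_def multi_index_def using p by auto
  have Pi: "\<phi> \<in> carrier ?R \<rightarrow> carrier ?R"
  proof
    fix x assume x: "x \<in> carrier ?R"
    show "\<phi> x \<in> carrier ?R" unfolding carr tate_carrier_def mem_Collect_eq
    proof (intro conjI allI impI)
      fix \<nu> assume "\<not> multi_index n \<nu>" then show "\<phi> x \<nu> = 0" by (simp add: \<phi>_def)
    next
      fix e :: real assume e: "e > 0"
      have fin: "finite {\<nu>. e ^ p / C \<le> av (x \<nu>)}"
        using x e C p unfolding carr tate_carrier_def by auto
      have "{\<nu>. e \<le> av (\<phi> x \<nu>)} \<subseteq> mp -` {\<nu>. e ^ p / C \<le> av (x \<nu>)}"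
      proof
        fix \<mu> assume h: "\<mu> \<in> {\<nu>. e \<le> av (\<phi> x \<nu>)}"
        have "multi_index n \<mu>"
        proof (rule ccontr)
          assume "\<not> multi_index n \<mu>" then have "\<phi> x \<mu> = 0" by (simp add: \<phi>_def)
          then show False using h e av_basic(1)[OF av] by simp
        qed
        then have "e \<le> av (lam (x (mp \<mu>)))" using h by (simp add: \<phi>_def)
        then have "e ^ p \<le> av (lam (x (mp \<mu>))) ^ p" using e by (simp add: power_mono)
        also have "\<dots> \<le> C * av (x (mp \<mu>))" by (rule C(2))
        finally show "\<mu> \<in> mp -` {\<nu>. e ^ p / C \<le> av (x \<nu>)}" using C by (simp add: field_simps)
      qed
      then show "finite {\<nu>. e \<le> av (\<phi> x \<nu>)}"
        using finite_vimageI[OF fin inj_mp] finite_subset by blast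
    qed
  qed
  have add: "\<forall>x\<in>carrier ?R. \<forall>y\<in>carrier ?R. \<phi> (x \<oplus>\<^bsub>?R\<^esub> y) = \<phi> x \<oplus>\<^bsub>?R\<^esub> \<phi> y"
    by (simp add: tate_algebra_def \<phi>_def fun_eq_iff ladd)
  have one: "\<phi> \<one>\<^bsub>?R\<^esub> = \<one>\<^bsub>?R\<^esub>"
  proof -
    have "\<And>\<mu>. mp \<mu> = (\<lambda>_. 0) \<longleftrightarrow> \<mu> = (\<lambda>_. 0)" unfolding mp_def using p by (auto simp: fun_eq_iff)
    moreover have "multi_index n (\<lambda>_. 0)" by (simp add: multi_index_def)
    ultimately show ?thesis
      unfolding tate_algebra_def ring.simps monoid.simps
    proof -
      assume a1: "\<And>\<mu>. (mp \<mu> = (\<lambda>_. 0)) = (\<mu> = (\<lambda>_. 0))" and a2: "multi_index n (\<lambda>_. 0)"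
      show "\<phi> ps_one = ps_one"
      proof
        fix \<mu> show "\<phi> ps_one \<mu> = ps_one \<mu>"
        proof (cases "\<mu> = (\<lambda>_. 0)")
          case True then show ?thesis using a2 l1 a1[of \<mu>] by (simp add: \<phi>_def ps_one_def)
        next
          case False then show ?thesis using a1[of \<mu>] lam_zero[OF lam] by (simp add: \<phi>_def ps_one_def)
        qed
      qed
    qed
  qed
  have main: "\<forall>r\<in>carrier ?R. \<forall>x\<in>carrier ?R. \<phi> ((r [^]\<^bsub>?R\<^esub> p) \<otimes>\<^bsub>?R\<^esub> x) = r \<otimes>\<^bsub>?R\<^esub> \<phi> x"
  proof (intro ballI)
    fix r x assume r: "r \<in> carrier ?R" and x: "x \<in> carrier ?R"
    have rfs: "\<forall>\<nu>. \<not> fsupp \<nu> \<longrightarrow> r \<nu> = 0" using r tc_fs carr by auto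
    have rp: "r [^]\<^bsub>?R\<^esub> p = (\<lambda>\<nu>. if \<forall>i. p dvd \<nu> i then r (\<lambda>i. \<nu> i div p) ^ p else 0)"
      using tate_pow[OF rfs] pow_char[OF p] Abs_ser_inverse[of r] rfs by (auto simp: fun_eq_iff)
    show "\<phi> ((r [^]\<^bsub>?R\<^esub> p) \<otimes>\<^bsub>?R\<^esub> x) = r \<otimes>\<^bsub>?R\<^esub> \<phi> x"
    proof
      fix \<mu>
      show "\<phi> ((r [^]\<^bsub>?R\<^esub> p) \<otimes>\<^bsub>?R\<^esub> x) \<mu> = (r \<otimes>\<^bsub>?R\<^esub> \<phi> x) \<mu>"
      proof (cases "multi_index n \<mu>")
        case False
        have "ps_mult r (\<phi> x) \<mu> = 0"
          unfolding ps_mult_box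
        proof (rule sum.neutral, rule ballI)
          fix \<alpha> assume "\<alpha> \<in> box \<mu>"
          show "r \<alpha> * \<phi> x (\<lambda>i. \<mu> i - \<alpha> i) = 0"
          proof (cases "multi_index n \<alpha>")
            case True
            then have "\<not> multi_index n (\<lambda>i. \<mu> i - \<alpha> i)" using False
              unfolding multi_index_def by auto
            then show ?thesis by (simp add: \<phi>_def)
          next
            case False then show ?thesis using r by (simp add: tate_algebra_def tate_carrier_def)
          qed
        qed
        then show ?thesis using False by (simp add: tate_algebra_def \<phi>_def)
      next
        case True
        have fsm: "fsupp \<mu>" using True multi_fsupp by blast
        have fsm2: "fsupp (mp \<mu>)" using True mp_multi multi_fsupp by blast
        let ?T = "{\<beta>\<in>box (mp \<mu>). \<forall>i. p dvd \<beta> i}"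
        have "ps_mult (r [^]\<^bsub>?R\<^esub> p) x (mp \<mu>) =
            (\<Sum>\<beta>\<in>box (mp \<mu>). if \<forall>i. p dvd \<beta> i then r (\<lambda>i. \<beta> i div p) ^ p * x (\<lambda>i. mp \<mu> i - \<beta> i) else 0)"
          unfolding ps_mult_box rp by (rule sum.cong) auto
        also have "\<dots> = (\<Sum>\<beta>\<in>?T. r (\<lambda>i. \<beta> i div p) ^ p * x (\<lambda>i. mp \<mu> i - \<beta> i))"
          by (rule sum.inter_filter[symmetric]) (rule finite_box[OF fsm2])
        also have "\<dots> = (\<Sum>\<alpha>\<in>box \<mu>. r \<alpha> ^ p * x (mp (\<lambda>i. \<mu> i - \<alpha> i)))"
        proof (rule sum.reindex_bij_witness[where i="mp" and j="\<lambda>\<beta> i. \<beta> i div p"])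
          fix \<beta> assume b: "\<beta> \<in> ?T"
          show "mp (\<lambda>i. \<beta> i div p) = \<beta>" using b unfolding mp_def by auto
          show "(\<lambda>i. \<beta> i div p) \<in> box \<mu>" using b p unfolding mp_def box_def
            by (auto simp: div_le_mono) (metis div_le_mono nonzero_mult_div_cancel_left not_gr0)
          have e: "(\<lambda>i. mp \<mu> i - \<beta> i) = mp (\<lambda>i. \<mu> i - \<beta> i div p)"
            using b unfolding mp_def by (auto simp: diff_mult_distrib2 fun_eq_iff)
          show "r (\<lambda>i. \<beta> i div p) ^ p * x (mp (\<lambda>i. \<mu> i - \<beta> i div p)) = r (\<lambda>i. \<beta> i div p) ^ p * x (\<lambda>i. mp \<mu> i - \<beta> i)"
            using e by simp
        next
          fix \<alpha> assume "\<alpha> \<in> box \<mu>"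
          show "(\<lambda>i. mp \<alpha> i div p) = \<alpha>" unfolding mp_def using p by simp
          show "mp \<alpha> \<in> ?T" using \<open>\<alpha> \<in> box \<mu>\<close> unfolding mp_def box_def by simp
        qed
        finally have e1: "ps_mult (r [^]\<^bsub>?R\<^esub> p) x (mp \<mu>) = (\<Sum>\<alpha>\<in>box \<mu>. r \<alpha> ^ p * x (mp (\<lambda>i. \<mu> i - \<alpha> i)))" .
        have "\<phi> ((r [^]\<^bsub>?R\<^esub> p) \<otimes>\<^bsub>?R\<^esub> x) \<mu> = lam (ps_mult (r [^]\<^bsub>?R\<^esub> p) x (mp \<mu>))"
          using True by (simp add: \<phi>_def tate_algebra_def)
        also have "\<dots> = (\<Sum>\<alpha>\<in>box \<mu>. r \<alpha> * lam (x (mp (\<lambda>i. \<mu> i - \<alpha> i))))"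
          unfolding e1 lam_sum[OF lam] lsc ..
        also have "\<dots> = ps_mult r (\<phi> x) \<mu>"
          unfolding ps_mult_box
        proof (rule sum.cong[OF refl])
          fix \<alpha> assume "\<alpha> \<in> box \<mu>"
          have "multi_index n (\<lambda>i. \<mu> i - \<alpha> i)" using True unfolding multi_index_def by simp
          then show "r \<alpha> * lam (x (mp (\<lambda>i. \<mu> i - \<alpha> i))) = r \<alpha> * \<phi> x (\<lambda>i. \<mu> i - \<alpha> i)"
            by (simp add: \<phi>_def)
        qed
        finally show ?thesis by (simp add: tate_algebra_def)
      qed
    qed
  qed
  show ?thesis unfolding frobenius_split_def using Pi add main one by blast
qed

definition sub :: "nat \<Rightarrow> 'k::field set \<Rightarrow> bool" where
  "sub p H \<longleftrightarrow> 0 \<in> H \<and> (\<forall>x\<in>H. \<forall>y\<in>H. x + y \<in> H) \<and> (\<forall>c. \<forall>x\<in>H. c ^ p * x \<in> H)"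

definition Wof :: "nat \<Rightarrow> 'k::field set \<Rightarrow> 'k set" where
  "Wof p H = {c ^ p + h | c h. h \<in> H}"

definition orth :: "('k::field \<Rightarrow> real) \<Rightarrow> nat \<Rightarrow> real \<Rightarrow> 'k set \<Rightarrow> bool" where
  "orth av p D H \<longleftrightarrow> (\<forall>c. \<forall>h\<in>H. D * av c ^ p \<le> av (c ^ p + h))"

definition closedk :: "('k::field \<Rightarrow> real) \<Rightarrow> 'k set \<Rightarrow> bool" where
  "closedk av W \<longleftrightarrow> (\<forall>x. (\<forall>e>0. \<exists>w\<in>W. av (x - w) < e) \<longrightarrow> x \<in> W)"

locale naf =
  fixes av :: "'k::field \<Rightarrow> real" and p :: nat
  assumes av: "nonarch_abs av" and cplt: "av_complete av" and ch: "CHAR('k) = p" and ppos: "p > 0"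
begin

lemma av0: "av 0 = 0" and av1: "av 1 = 1" and avm: "av (- x) = av x" and avmult: "av (x * y) = av x * av y"
  and avge: "av x \<ge> 0" and aveq0: "av x = 0 \<longleftrightarrow> x = 0" and avtri: "av (x + y) \<le> max (av x) (av y)"
  and avpow: "av (x ^ n) = av x ^ n"
  using av_basic[OF av] by auto

lemma avpos: "x \<noteq> 0 \<Longrightarrow> av x > 0"
  using avge[of x] aveq0[of x] by linarith

lemma avminus: "av (x - y) = av (y - x)"
  using avm[of "x - y"] by simp

lemma avtri_diff: "av (x - y) \<le> max (av (x - z)) (av (z - y))"
  using avtri[of "x - z" "z - y"] by simp

lemma avinv: "av (inverse x) = inverse (av x)"
proof (cases "x = 0")
  case False
  then have e: "av x * av (inverse x) = 1" using avmult[of x "inverse x"] av1 by simp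
  have "av x \<noteq> 0" using False aveq0 by simp
  then have "av (inverse x) = (av x * av (inverse x)) / av x" by simp
  then show ?thesis using e by (simp add: divide_inverse)
qed (simp add: av0)

lemma prime_p: "prime p"
  using ch ppos prime_CHAR_semidom[where 'a='k] by simp

lemma frob_add: "(a + b :: 'k) ^ p = a ^ p + b ^ p"
  by (rule freshmans_dream) (use prime_p ch in auto)

lemma frob_neg: "(- a :: 'k) ^ p = - (a ^ p)"
  by (rule minus_power_prime_CHAR) (use prime_p ch in auto)

lemma frob_diff: "(a - b :: 'k) ^ p = a ^ p - b ^ p"
  using frob_add[of a "- b"] frob_neg[of b] by simp

lemma avpow_le: "av a ^ p \<le> av b ^ p \<Longrightarrow> av a \<le> av b"
  using power_le_imp_le_base[of "av a" p "av b"] avge ppos by auto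

lemma sub_neg: "sub p (H::'k set) \<Longrightarrow> x \<in> H \<Longrightarrow> - x \<in> H"
proof -
  assume "sub p H" "x \<in> H"
  then have "(- 1) ^ p * x \<in> H" unfolding sub_def by blast
  moreover have "(- 1 :: 'k) ^ p = - 1" using frob_neg[of 1] by simp
  ultimately have "(- 1) ^ p * x = - x" by simp
  with \<open>(- 1) ^ p * x \<in> H\<close> show "- x \<in> H" by simp
qed

lemma sub_diff: "sub p (H::'k set) \<Longrightarrow> x \<in> H \<Longrightarrow> y \<in> H \<Longrightarrow> x - y \<in> H"
  using sub_neg[of H y] unfolding sub_def by (metis diff_conv_add_uminus)

lemma lemmaL:
  assumes H: "sub p H" and D: "D > 0" "orth av p D H" and all: "\<And>y. y \<in> Wof p H"
  shows "\<exists>lam. good_lam av p lam"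
proof -
  have uniq: "c = c'" if "h \<in> H" "h' \<in> H" "c ^ p + h = c' ^ p + h'" for c c' h h'
  proof -
    have "(c - c') ^ p + (h - h') = 0" using that(3) by (simp add: frob_diff algebra_simps)
    moreover have "h - h' \<in> H" using sub_diff[OF H that(1,2)] .
    moreover have "D * av (c - c') ^ p \<le> av ((c - c') ^ p + (h - h'))"
      using D(2) \<open>h - h' \<in> H\<close> unfolding orth_def by blast
    ultimately have "D * av (c - c') ^ p \<le> 0" using av0 by simp
    then have "av (c - c') ^ p \<le> 0" using D(1) by (simp add: mult_le_0_iff)
    moreover have "av (c - c') ^ p \<ge> 0" using avge by simp
    ultimately have "av (c - c') ^ p = 0" by linarith
    then have "av (c - c') = 0" by simp
    then show ?thesis using aveq0 by simp
  qed
  define lam where "lam y = (THE c. \<exists>h\<in>H. y = c ^ p + h)" for y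
  have lam_eq: "lam (c ^ p + h) = c" if "h \<in> H" for c h
    unfolding lam_def
  proof (rule the_equality)
    show "\<exists>h'\<in>H. c ^ p + h = c ^ p + h'" using that by blast
    fix c' assume "\<exists>h'\<in>H. c ^ p + h = c' ^ p + h'"
    then obtain h' where "h' \<in> H" "c ^ p + h = c' ^ p + h'" by blast
    then show "c' = c" using uniq[OF that] by metis
  qed
  have dec: "\<exists>c h. h \<in> H \<and> y = c ^ p + h" for y using all[of y] unfolding Wof_def by auto
  have g1: "lam (x + y) = lam x + lam y" for x y
  proof -
    obtain c1 h1 where 1: "h1 \<in> H" "x = c1 ^ p + h1" using dec[of x] by blast
    obtain c2 h2 where 2: "h2 \<in> H" "y = c2 ^ p + h2" using dec[of y] by blast
    have e: "x + y = (c1 + c2) ^ p + (h1 + h2)" using 1 2 by (simp add: frob_add add_ac)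
    have "h1 + h2 \<in> H" using H 1 2 unfolding sub_def by blast
    then have "lam (x + y) = c1 + c2" unfolding e by (rule lam_eq)
    moreover have "lam x = c1" using 1 lam_eq by simp
    moreover have "lam y = c2" using 2 lam_eq by simp
    ultimately show ?thesis by simp
  qed
  have g2: "lam (a ^ p * y) = a * lam y" for a y
  proof -
    obtain c h where "h \<in> H" "y = c ^ p + h" using dec[of y] by blast
    moreover have "a ^ p * y = (a * c) ^ p + a ^ p * h" using calculation by (simp add: algebra_simps power_mult_distrib)
    moreover have "a ^ p * h \<in> H" using H calculation unfolding sub_def by blast
    ultimately show ?thesis using lam_eq by simp
  qed
  have g3: "lam 1 = 1" using lam_eq[of 0 1] H unfolding sub_def by simp
  have g4: "av (lam y) ^ p \<le> (1 / D) * av y" for y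
  proof -
    obtain c h where "h \<in> H" "y = c ^ p + h" using dec[of y] by blast
    moreover have "D * av c ^ p \<le> av y" using D(2) calculation unfolding orth_def by blast
    ultimately have "D * av (lam y) ^ p \<le> av y" using lam_eq by simp
    then show ?thesis using D(1) by (simp add: field_simps)
  qed
  have "1 / D > 0" using D(1) by simp
  then have "good_lam av p lam" unfolding good_lam_def using g1 g2 g3 g4 by blast
  then show ?thesis by blast
qed

end

lemma int_scale:
  fixes t r :: real
  assumes t: "0 < t" "t < 1" and r: "r > 0"
  shows "\<exists>m::int. t powr (m + 1) < r \<and> r \<le> t powr m"
proof -
  define L where "L = ln r / ln t"
  have lt: "ln t < 0" using t by simp
  define m where "m = floor L"
  have m1: "m \<le> L" and m2: "L < m + 1" unfolding m_def by linarith+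
  have "L * ln t = ln r" unfolding L_def using lt by simp
  have "real_of_int m * ln t \<ge> L * ln t" using m1 lt by (simp add: mult_right_mono_neg)
  then have a: "exp (real_of_int m * ln t) \<ge> r" using \<open>L * ln t = ln r\<close> r by (metis exp_ln exp_le_cancel_iff)
  have "(real_of_int m + 1) * ln t < L * ln t" using m2 lt by (simp add: mult_strict_right_mono_neg)
  then have b: "exp ((real_of_int m + 1) * ln t) < r" using \<open>L * ln t = ln r\<close> r by (metis exp_ln exp_less_cancel_iff)
  show ?thesis
    by (rule exI[of _ m]) (use a b t in \<open>simp add: powr_def mult.commute\<close>)
qed

context naf
begin

lemma powr_pow_inv: "a \<ge> 0 \<Longrightarrow> (a ^ p) powr (1 / real p) = (a::real)"
proof (cases "a = 0")
  case False
  assume "a \<ge> 0"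
  then have "a > 0" using False by simp
  then have "(a ^ p) powr (1 / real p) = (a powr real p) powr (1 / real p)" by (simp add: powr_realpow)
  also have "\<dots> = a" using ppos \<open>a > 0\<close> by (simp add: powr_powr)
  finally show ?thesis .
qed (use ppos in simp)

lemma pow_powr_inv: "a \<ge> 0 \<Longrightarrow> (a powr (1 / real p)) ^ p = (a::real)"
proof (cases "a = 0")
  case False
  assume "a \<ge> 0"
  then have "a > 0" using False by simp
  then have "(a powr (1 / real p)) ^ p = (a powr (1 / real p)) powr real p" by (simp add: powr_realpow)
  also have "\<dots> = a" using ppos \<open>a > 0\<close> by (simp add: powr_powr)
  finally show ?thesis .
qed (use ppos in simp)

lemma avpowi: "av (x powi k) = av x powi k"
  unfolding power_int_def by (simp add: avpow avinv power_inverse)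

lemma rn_smult: "rootp_norm av p (rootp_smult p a y) = av a * rootp_norm av p y"
  unfolding rootp_norm_def rootp_smult_def
  by (simp add: avmult avpow powr_mult avge powr_pow_inv)

lemma polar_lam:
  assumes nt: "nontrivial_value_group av" and pol: "rootp_polar av p"
  shows "\<exists>lam. good_lam av p lam"
proof -
  obtain \<pi> where pi: "\<pi> \<noteq> 0" "av \<pi> < 1"
  proof -
    obtain x where x: "x \<noteq> 0" "av x \<noteq> 1" using nt unfolding nontrivial_value_group_def by blast
    show ?thesis
    proof (cases "av x < 1")
      case True then show ?thesis using that x by blast
    next
      case False
      then have "av x > 1" using x by simp
      then have "av (inverse x) < 1" by (simp add: avinv inverse_less_1_iff)
      moreover have "inverse x \<noteq> 0" using x by simp
      ultimately show ?thesis using that by blast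
    qed
  qed
  define t where "t = av \<pi>"
  have t: "0 < t" "t < 1" using pi avpos unfolding t_def by auto
  define c where "c = inverse \<pi>"
  have c: "av c > 1" using t unfolding c_def t_def by (simp add: avinv one_less_inverse_iff)
  have "rootp_norm av p (c ^ p) = av c"
    unfolding rootp_norm_def by (simp add: avpow powr_pow_inv avge)
  then have "1 < rootp_norm av p (c ^ p)" using c by simp
  then obtain f where f: "rootp_linear_functional p f"
    "\<forall>y. rootp_norm av p y \<le> 1 \<longrightarrow> av (f y) \<le> 1" "av (f (c ^ p)) > 1"
    using pol unfolding rootp_polar_def by blast
  have fadd: "\<And>x y. f (x + y) = f x + f y" and fsc: "\<And>a y. f (a ^ p * y) = a * f y"
    using f(1) unfolding rootp_linear_functional_def rootp_smult_def by auto
  have fc: "f (c ^ p) = c * f 1" using fsc[of c 1] by simp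
  have f1: "f 1 \<noteq> 0" using f(3) fc av0 by auto
  have "f 0 = f 0 + f 0" using fadd[of 0 0] by simp
  then have f0: "f 0 = 0" by (rule add_cancel_right_right[THEN iffD1])
  have bound: "av (f y) ^ p \<le> (1 / t ^ p) * av y" for y
  proof (cases "y = 0")
    case True then show ?thesis using f0 av0 ppos by (simp add: power_0_left)
  next
    case False
    define r where "r = rootp_norm av p y"
    have r: "r > 0" unfolding r_def rootp_norm_def using avpos[OF False] by simp
    obtain m :: int where m: "t powr (real_of_int m + 1) < r" "r \<le> t powr m" using int_scale[OF t r] by blast
    define a where "a = \<pi> powi (- m)"
    have ava: "av a = t powr (- m)"
      unfolding a_def avpowi t_def using t powr_real_of_int'[of "av \<pi>" "- m"] unfolding t_def by simp
    have "av a * r \<le> t powr (- m) * t powr m" using m(2) ava t by (simp add: mult_left_mono)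
    also have "\<dots> = 1" using t by (simp add: powr_add[symmetric])
    finally have le1: "av a * r \<le> 1" .
    have "t = t powr (- m) * t powr (real_of_int m + 1)" using t by (simp add: powr_add[symmetric])
    also have "\<dots> < av a * r" using m(1) ava t by simp
    finally have gt: "t < av a * r" .
    have "rootp_norm av p (rootp_smult p a y) \<le> 1" using le1 by (simp add: rn_smult r_def)
    then have "av (f (rootp_smult p a y)) \<le> 1" using f(2) by blast
    then have fa: "av a * av (f y) \<le> 1" using fsc by (simp add: rootp_smult_def avmult)
    have "av (f y) * t \<le> r"
    proof -
      have "av (f y) * t \<le> av (f y) * (av a * r)" using gt avge[of "f y"] by (simp add: mult_left_mono)
      also have "\<dots> = (av a * av (f y)) * r" by simp
      also have "\<dots> \<le> r" using fa r by (simp add: mult_left_le_one_le avge mult_nonneg_nonneg)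
      finally show ?thesis .
    qed
    then have "av (f y) \<le> r / t" using t by (simp add: field_simps)
    then have "av (f y) ^ p \<le> (r / t) ^ p" using avge by (simp add: power_mono)
    also have "\<dots> = r ^ p / t ^ p" by (simp add: power_divide)
    also have "r ^ p = av y" unfolding r_def rootp_norm_def by (simp add: pow_powr_inv avge)
    finally show ?thesis by simp
  qed
  define lam where "lam y = f y / f 1" for y
  have g1: "lam (x + y) = lam x + lam y" for x y unfolding lam_def by (simp add: fadd add_divide_distrib)
  have g2: "lam (a ^ p * y) = a * lam y" for a y unfolding lam_def by (simp add: fsc)
  have g3: "lam 1 = 1" unfolding lam_def using f1 by simp
  define C where "C = 1 / (t ^ p * av (f 1) ^ p)"
  have Cpos: "C > 0" unfolding C_def using t f1 avpos by simp
  have g4: "av (lam y) ^ p \<le> C * av y" for y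
  proof -
    have "av (lam y) ^ p = av (f y) ^ p / av (f 1) ^ p"
      unfolding lam_def by (simp add: avmult avinv divide_inverse power_mult_distrib power_inverse)
    also have "\<dots> \<le> ((1 / t ^ p) * av y) / av (f 1) ^ p"
      using bound[of y] avpos[OF f1] by (intro divide_right_mono) simp_all
    also have "\<dots> = C * av y" unfolding C_def by simp
    finally show ?thesis .
  qed
  have "good_lam av p lam" unfolding good_lam_def using g1 g2 g3 g4 Cpos by blast
  then show ?thesis by blast
qed

end

context naf
begin

lemma sph_family:
  assumes sc: "spherically_complete av"
    and pw: "\<And>i j. av (cc i - cc j) \<le> max (rr i) (rr j)" and nn: "\<And>i. rr i \<ge> 0"
  shows "\<exists>x. \<forall>i. av (x - cc i) \<le> (rr i :: real)"
proof -
  define R where "R = Inf (range rr)"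
  have bdd: "bdd_below (range rr)" unfolding bdd_below_def using nn by blast
  have Rle: "R \<le> rr i" for i unfolding R_def using bdd by (simp add: cInf_lower)
  have Rge: "R \<ge> 0" unfolding R_def using nn by (intro cInf_greatest) auto
  define s where "s n = R + 1 / real (Suc n)" for n
  have ex: "\<exists>i. rr i < s n" for n
  proof -
    have "Inf (range rr) < s n" unfolding s_def R_def by simp
    then show ?thesis using cInf_lessD[of "range rr" "s n"] by auto
  qed
  define ii where "ii n = (SOME i. rr i < s n)" for n
  have ii: "rr (ii n) < s n" for n unfolding ii_def using ex[of n] by (rule someI_ex)
  define c where "c n = cc (ii n)" for n
  have smono: "s (Suc n) \<le> s n" for n unfolding s_def by (simp add: frac_le)
  have snn: "s n \<ge> 0" for n unfolding s_def using Rge by simp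
  have "(\<Inter>n. closed_disk av (c n) (s n)) \<noteq> {}"
    using sc unfolding spherically_complete_def
  proof (elim allE impE)
    show "(\<forall>n. 0 \<le> s n) \<and> (\<forall>n. closed_disk av (c (Suc n)) (s (Suc n)) \<subseteq> closed_disk av (c n) (s n))"
    proof (intro conjI allI subsetI)
      fix n show "0 \<le> s n" by (rule snn)
    next
      fix n z assume "z \<in> closed_disk av (c (Suc n)) (s (Suc n))"
      then have z: "av (z - c (Suc n)) \<le> s (Suc n)" by (simp add: closed_disk_def)
      have "av (z - c n) \<le> max (av (z - c (Suc n))) (av (c (Suc n) - c n))" by (rule avtri_diff)
      also have "\<dots> \<le> s n"
        using z smono[of n] pw[of "ii (Suc n)" "ii n"] ii[of n] ii[of "Suc n"] unfolding c_def by auto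
      finally show "z \<in> closed_disk av (c n) (s n)" by (simp add: closed_disk_def)
    qed
  qed
  then obtain x where x: "\<And>n. av (x - c n) \<le> s n" by (auto simp: closed_disk_def)
  have "av (x - cc i) \<le> rr i" for i
  proof (rule ccontr)
    assume "\<not> av (x - cc i) \<le> rr i"
    then have d: "av (x - cc i) - rr i > 0" by simp
    obtain n where n: "inverse (real (Suc n)) < av (x - cc i) - rr i"
      using reals_Archimedean[OF d] by blast
    have "av (x - cc i) \<le> max (av (x - c n)) (av (c n - cc i))" by (rule avtri_diff)
    also have "\<dots> \<le> rr i + 1 / real (Suc n)"
    proof -
      have "s n \<le> rr i + 1 / real (Suc n)" using Rle[of i] unfolding s_def by simp
      moreover have "av (c n - cc i) \<le> max (rr (ii n)) (rr i)" using pw[of "ii n" i] unfolding c_def .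
      moreover have "0 \<le> 1 / real (Suc n)" by simp
      ultimately have "av (c n - cc i) \<le> rr i + 1 / real (Suc n)" using ii[of n]
        unfolding le_max_iff_disj by (elim disjE) linarith+
      then show ?thesis using x[of n] \<open>s n \<le> rr i + 1 / real (Suc n)\<close> by simp
    qed
    finally show False using n by (simp add: inverse_eq_divide)
  qed
  then show ?thesis by blast
qed

lemma avdiff_le: "av (u - v) \<le> max (av u) (av v)"
  using avtri[of u "- v"] avm[of v] by simp

lemma pow_le_base: "(x::real) ^ p \<le> y ^ p \<Longrightarrow> 0 \<le> y \<Longrightarrow> x \<le> y"
proof -
  assume "x ^ p \<le> y ^ p" "0 \<le> y"
  moreover obtain m where "p = Suc m" using ppos gr0_implies_Suc by blast
  ultimately show "x \<le> y" using power_le_imp_le_base[of x m y] by simp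
qed

lemma sub_zero: "sub p ({0}::'k set)"
  unfolding sub_def by simp

lemma orth_zero: "orth av p 1 ({0}::'k set)"
  unfolding orth_def by (simp add: avpow)

lemma maximal_orth:
  "\<exists>M. sub p M \<and> orth av p 1 M \<and> (\<forall>X. sub p X \<and> orth av p 1 X \<and> M \<subseteq> X \<longrightarrow> X = (M::'k set))"
proof -
  let ?A = "{H::'k set. sub p H \<and> orth av p 1 H}"
  have "\<exists>M\<in>?A. \<forall>X\<in>?A. M \<subseteq> X \<longrightarrow> X = M"
  proof (rule subset_Zorn_nonempty)
    show "?A \<noteq> {}" using sub_zero orth_zero by blast
  next
    fix C assume C: "C \<noteq> {}" "subset.chain ?A C"
    have CA: "C \<subseteq> ?A" and ch: "\<And>X Y. X \<in> C \<Longrightarrow> Y \<in> C \<Longrightarrow> X \<subseteq> Y \<or> Y \<subseteq> X"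
      using C(2) unfolding subset.chain_def by auto
    have "sub p (\<Union>C)" unfolding sub_def
    proof (intro conjI ballI allI)
      obtain X where "X \<in> C" using C(1) by blast
      then show "0 \<in> \<Union>C" using CA unfolding sub_def by blast
    next
      fix x y assume "x \<in> \<Union>C" "y \<in> \<Union>C"
      then obtain X Y where XY: "X \<in> C" "Y \<in> C" "x \<in> X" "y \<in> Y" by blast
      show "x + y \<in> \<Union>C"
      proof (cases "X \<subseteq> Y")
        case True then show ?thesis using XY CA unfolding sub_def by blast
      next
        case False then have "Y \<subseteq> X" using ch XY by blast
        then show ?thesis using XY CA unfolding sub_def by blast
      qed
    next
      fix c x assume "x \<in> \<Union>C"
      then show "c ^ p * x \<in> \<Union>C" using CA unfolding sub_def by blast
    qed
    moreover have "orth av p 1 (\<Union>C)" using CA unfolding orth_def by blast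
    ultimately show "\<Union>C \<in> ?A" by blast
  qed
  then show ?thesis by blast
qed

lemma sph_lam:
  assumes sc: "spherically_complete av"
  shows "\<exists>lam. good_lam av p lam"
proof -
  obtain M :: "'k set" where M: "sub p M" "orth av p 1 M"
    and mx: "\<And>X. sub p X \<Longrightarrow> orth av p 1 X \<Longrightarrow> M \<subseteq> X \<Longrightarrow> X = M"
    using maximal_orth by blast
  have M0: "0 \<in> M" using M(1) unfolding sub_def by blast
  have Madd: "\<And>x y. x \<in> M \<Longrightarrow> y \<in> M \<Longrightarrow> x + y \<in> M" and Msc: "\<And>c x. x \<in> M \<Longrightarrow> c ^ p * x \<in> M"
    using M(1) unfolding sub_def by blast+
  have Morth: "\<And>c h. h \<in> M \<Longrightarrow> av c ^ p \<le> av (c ^ p + h)" using M(2) unfolding orth_def by simp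
  have all: "y \<in> Wof p M" for y
  proof (rule ccontr)
    assume b: "y \<notin> Wof p M"
    define \<rho> where "\<rho> z = Inf ((\<lambda>h. av (y - z ^ p + h)) ` M)" for z
    have bdd: "bdd_below ((\<lambda>h. av (y - z ^ p + h)) ` M)" for z
      unfolding bdd_below_def using avge by blast
    have \<rho>le: "\<rho> z \<le> av (y - z ^ p + h)" if "h \<in> M" for z h
      unfolding \<rho>_def using bdd that by (intro cInf_lower) auto
    have \<rho>nn: "\<rho> z \<ge> 0" for z
      unfolding \<rho>_def using M0 avge by (intro cInf_greatest) auto
    have \<rho>less: "\<exists>h\<in>M. av (y - z ^ p + h) < v" if "\<rho> z < v" for z v
      using cInf_lessD[of "(\<lambda>h. av (y - z ^ p + h)) ` M" v] that M0 unfolding \<rho>_def by auto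
    define rr where "rr z = \<rho> z powr (1 / real p)" for z
    have rrp: "rr z ^ p = \<rho> z" for z unfolding rr_def using \<rho>nn by (simp add: pow_powr_inv)
    have rrnn: "rr z \<ge> 0" for z unfolding rr_def by simp
    have pw: "av (z - z') \<le> max (rr z) (rr z')" for z z'
    proof -
      have "av (z - z') ^ p \<le> max (\<rho> z) (\<rho> z')"
      proof (rule ccontr)
        assume "\<not> av (z - z') ^ p \<le> max (\<rho> z) (\<rho> z')"
        then have lt: "\<rho> z < av (z - z') ^ p" "\<rho> z' < av (z - z') ^ p" by auto
        obtain h where h: "h \<in> M" "av (y - z ^ p + h) < av (z - z') ^ p" using \<rho>less[OF lt(1)] by blast
        obtain h' where h': "h' \<in> M" "av (y - z' ^ p + h') < av (z - z') ^ p" using \<rho>less[OF lt(2)] by blast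
        have "h' - h \<in> M" using sub_diff[OF M(1) h'(1) h(1)] .
        then have "av (z - z') ^ p \<le> av ((z - z') ^ p + (h' - h))" by (rule Morth)
        also have "(z - z') ^ p + (h' - h) = (y - z' ^ p + h') - (y - z ^ p + h)" by (simp add: frob_diff)
        also have "av \<dots> \<le> max (av (y - z' ^ p + h')) (av (y - z ^ p + h))"
          by (rule avdiff_le)
        finally show False using h(2) h'(2) by simp
      qed
      then have "av (z - z') ^ p \<le> rr z ^ p \<or> av (z - z') ^ p \<le> rr z' ^ p"
        unfolding rrp by (simp add: le_max_iff_disj)
      then have "av (z - z') \<le> rr z \<or> av (z - z') \<le> rr z'"
        using pow_le_base rrnn by blast
      then show ?thesis by (simp add: le_max_iff_disj)
    qed
    obtain a where a: "\<And>z. av (a - z) \<le> rr z"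
      using sph_family[OF sc, of "\<lambda>z. z" rr] pw rrnn by blast
    have key: "av (a - z) ^ p \<le> av (y - z ^ p + h)" if "h \<in> M" for z h
    proof -
      have "av (a - z) ^ p \<le> rr z ^ p" using a[of z] avge by (simp add: power_mono)
      also have "\<dots> \<le> av (y - z ^ p + h)" using rrp \<rho>le[OF that] by simp
      finally show ?thesis .
    qed
    define e where "e = y - a ^ p"
    define M' where "M' = {h + s ^ p * e | h s. h \<in> M}"
    have MM': "M \<subseteq> M'" unfolding M'_def using ppos by force
    have subM': "sub p M'" unfolding sub_def
    proof (intro conjI ballI allI)
      show "0 \<in> M'" using MM' M0 by blast
    next
      fix x x' assume "x \<in> M'" "x' \<in> M'"
      then obtain h s h' s' where "h \<in> M" "x = h + s ^ p * e" "h' \<in> M" "x' = h' + s' ^ p * e"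
        unfolding M'_def by blast
      moreover have "x + x' = (h + h') + (s + s') ^ p * e" using calculation by (simp add: frob_add algebra_simps)
      ultimately show "x + x' \<in> M'" unfolding M'_def using Madd by blast
    next
      fix c x assume "x \<in> M'"
      then obtain h s where "h \<in> M" "x = h + s ^ p * e" unfolding M'_def by blast
      moreover have "c ^ p * x = c ^ p * h + (c * s) ^ p * e" using calculation by (simp add: algebra_simps power_mult_distrib)
      ultimately show "c ^ p * x \<in> M'" unfolding M'_def using Msc by blast
    qed
    have orthM': "orth av p 1 M'" unfolding orth_def
    proof (intro allI ballI)
      fix c x assume "x \<in> M'"
      then obtain h s where hs: "h \<in> M" "x = h + s ^ p * e" unfolding M'_def by blast
      show "1 * av c ^ p \<le> av (c ^ p + x)"
      proof (cases "s = 0")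
        case True then show ?thesis using hs Morth ppos by (simp add: power_0_left)
      next
        case False
        define z where "z = a - c / s"
        have hM: "inverse s ^ p * h \<in> M" using Msc hs(1) by blast
        have 1: "s ^ p * (c / s) ^ p = c ^ p" using False by (simp add: power_mult_distrib[symmetric])
        have 2: "s ^ p * inverse s ^ p = 1" using False by (simp add: power_mult_distrib[symmetric])
        have "s ^ p * (y - z ^ p + inverse s ^ p * h) = s ^ p * y - s ^ p * a ^ p + s ^ p * (c / s) ^ p + (s ^ p * inverse s ^ p) * h"
          unfolding z_def frob_diff by (simp add: algebra_simps)
        also have "\<dots> = c ^ p + x" unfolding 1 2 hs(2) e_def by (simp add: algebra_simps)
        finally have eq: "c ^ p + x = s ^ p * (y - z ^ p + inverse s ^ p * h)" by simp
        have "av (c ^ p + x) = av s ^ p * av (y - z ^ p + inverse s ^ p * h)"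
          unfolding eq by (simp add: avmult avpow)
        also have "\<dots> \<ge> av s ^ p * av (a - z) ^ p"
          using key[OF hM, of z] avge by (simp add: mult_left_mono)
        finally have "av s ^ p * av (a - z) ^ p \<le> av (c ^ p + x)" .
        moreover have "av s ^ p * av (a - z) ^ p = av c ^ p"
          unfolding z_def using False by (simp add: avmult[symmetric] power_mult_distrib[symmetric])
        ultimately show ?thesis by simp
      qed
    qed
    have "M' = M" using mx[OF subM' orthM' MM'] .
    moreover have "e \<in> M'" unfolding M'_def using M0 ppos by (rule_tac CollectI, rule_tac exI[of _ 0], rule_tac exI[of _ 1]) simp
    ultimately have "e \<in> M" by simp
    then have "y \<in> Wof p M" unfolding Wof_def e_def by force
    then show False using b by simp
  qed
  show ?thesis by (rule lemmaL[OF M(1) _ M(2) all]) simp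
qed

end

definition ext :: "nat \<Rightarrow> 'k::field set \<Rightarrow> 'k \<Rightarrow> 'k set" where
  "ext p H e = {h + s ^ p * e | h s. h \<in> H}"

context naf
begin

lemma cauchy_seq:
  assumes K: "K > 0" and c: "\<And>i j. av (a i - a j) ^ p \<le> K * max (1 / real (Suc i)) (1 / real (Suc j))"
  shows "\<exists>L. \<forall>e>0. \<exists>N. \<forall>n\<ge>N. av (a n - L) ^ p < e"
proof -
  have "\<forall>e>0. \<exists>N. \<forall>m\<ge>N. \<forall>n\<ge>N. av (a m - a n) < e"
  proof (intro allI impI)
    fix e :: real assume e: "e > 0"
    then have "e ^ p / K > 0" using K by simp
    then obtain N where N: "inverse (real (Suc N)) < e ^ p / K" using reals_Archimedean by blast
    have "\<forall>m\<ge>N. \<forall>n\<ge>N. av (a m - a n) < e"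
    proof (intro allI impI)
      fix m n assume mn: "N \<le> m" "N \<le> n"
      have "max (1 / real (Suc m)) (1 / real (Suc n)) \<le> 1 / real (Suc N)"
        using mn by (simp add: frac_le)
      then have "av (a m - a n) ^ p \<le> K * (1 / real (Suc N))"
        using c[of m n] K by (meson mult_left_mono less_imp_le order_trans)
      also have "\<dots> < e ^ p" using N K by (simp add: field_simps)
      finally have lt: "av (a m - a n) ^ p < e ^ p" .
      show "av (a m - a n) < e"
      proof (rule ccontr)
        assume "\<not> av (a m - a n) < e"
        then have "e ^ p \<le> av (a m - a n) ^ p" using e by (simp add: power_mono)
        then show False using lt by simp
      qed
    qed
    then show "\<exists>N. \<forall>m\<ge>N. \<forall>n\<ge>N. av (a m - a n) < e" by blast
  qed
  then obtain L where L: "\<forall>e>0. \<exists>N. \<forall>n\<ge>N. av (a n - L) < e"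
    using cplt unfolding av_complete_def by blast
  have "\<forall>e>0. \<exists>N. \<forall>n\<ge>N. av (a n - L) ^ p < e"
  proof (intro allI impI)
    fix e :: real assume e: "e > 0"
    define d where "d = min 1 e"
    have d: "d > 0" "d \<le> 1" "d \<le> e" unfolding d_def using e by auto
    obtain N where N: "\<forall>n\<ge>N. av (a n - L) < d" using L d by blast
    have "av (a n - L) ^ p < e" if "n \<ge> N" for n
    proof -
      have lt: "av (a n - L) < d" using N that by blast
      have "av (a n - L) ^ p \<le> av (a n - L) ^ 1"
        using ppos lt d avge by (intro power_decreasing) auto
      then show ?thesis using lt d by simp
    qed
    then show "\<exists>N. \<forall>n\<ge>N. av (a n - L) ^ p < e" by blast
  qed
  then show ?thesis by blast
qed

lemma sub_Wof: "sub p (H::'k set) \<Longrightarrow> sub p (Wof p H)"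
  unfolding sub_def Wof_def
proof (intro conjI ballI allI)
  assume H: "0 \<in> H \<and> (\<forall>x\<in>H. \<forall>y\<in>H. x + y \<in> H) \<and> (\<forall>c. \<forall>x\<in>H. c ^ p * x \<in> H)"
  show "0 \<in> {c ^ p + h |c h. h \<in> H}" using H ppos by (intro CollectI exI[of _ 0]) (auto simp: power_0_left)
next
  fix x y assume H: "0 \<in> H \<and> (\<forall>x\<in>H. \<forall>y\<in>H. x + y \<in> H) \<and> (\<forall>c. \<forall>x\<in>H. c ^ p * x \<in> H)"
    and "x \<in> {c ^ p + h |c h. h \<in> H}" "y \<in> {c ^ p + h |c h. h \<in> H}"
  then obtain c1 h1 c2 h2 where "h1 \<in> H" "x = c1 ^ p + h1" "h2 \<in> H" "y = c2 ^ p + h2" by blast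
  moreover have "x + y = (c1 + c2) ^ p + (h1 + h2)" using calculation by (simp add: frob_add algebra_simps)
  ultimately show "x + y \<in> {c ^ p + h |c h. h \<in> H}" using H by blast
next
  fix c x assume H: "0 \<in> H \<and> (\<forall>x\<in>H. \<forall>y\<in>H. x + y \<in> H) \<and> (\<forall>c. \<forall>x\<in>H. c ^ p * x \<in> H)"
    and "x \<in> {c ^ p + h |c h. h \<in> H}"
  then obtain c1 h1 where "h1 \<in> H" "x = c1 ^ p + h1" by blast
  moreover have "c ^ p * x = (c * c1) ^ p + c ^ p * h1" using calculation by (simp add: algebra_simps power_mult_distrib)
  ultimately show "c ^ p * x \<in> {c ^ p + h |c h. h \<in> H}" using H by blast
qed

lemma closed_step:
  assumes W: "sub p (W::'k set)" "closedk av W" and e: "av e > 0" and T: "T > 0"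
    and key: "\<And>u a. u \<in> W \<Longrightarrow> av (a ^ p * e) \<le> T * av (u + a ^ p * e)"
  shows "closedk av {u + a ^ p * e | u a. u \<in> W}"
  unfolding closedk_def
proof (intro allI impI)
  fix x assume x: "\<forall>\<epsilon>>0. \<exists>w\<in>{u + a ^ p * e |u a. u \<in> W}. av (x - w) < \<epsilon>"
  have "\<forall>j. \<exists>ua. fst ua \<in> W \<and> av (x - (fst ua + snd ua ^ p * e)) < 1 / real (Suc j)"
  proof
    fix j
    have "(1::real) / real (Suc j) > 0" by simp
    then obtain w where "w \<in> {u + a ^ p * e |u a. u \<in> W}" "av (x - w) < 1 / real (Suc j)" using x by blast
    then show "\<exists>ua. fst ua \<in> W \<and> av (x - (fst ua + snd ua ^ p * e)) < 1 / real (Suc j)" by force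
  qed
  then obtain F where F: "\<And>j. fst (F j) \<in> W" "\<And>j. av (x - (fst (F j) + snd (F j) ^ p * e)) < 1 / real (Suc j)"
    using choice[of "\<lambda>j ua. fst ua \<in> W \<and> av (x - (fst ua + snd ua ^ p * e)) < 1 / real (Suc j)"] by blast
  define u where "u j = fst (F j)" for j
  define a where "a j = snd (F j)" for j
  have u: "u j \<in> W" for j using F(1) unfolding u_def by simp
  have w: "av (x - (u j + a j ^ p * e)) < 1 / real (Suc j)" for j using F(2) unfolding u_def a_def by simp
  have ca: "av (a i - a j) ^ p \<le> (T / av e) * max (1 / real (Suc i)) (1 / real (Suc j))" for i j
  proof -
    have "(u i + a i ^ p * e) - (u j + a j ^ p * e) = (u i - u j) + (a i - a j) ^ p * e"
      by (simp add: frob_diff algebra_simps)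
    moreover have "u i - u j \<in> W" using sub_diff[OF W(1) u u] .
    ultimately have "av ((a i - a j) ^ p * e) \<le> T * av ((u i + a i ^ p * e) - (u j + a j ^ p * e))"
      using key by metis
    also have "av ((u i + a i ^ p * e) - (u j + a j ^ p * e)) \<le>
        max (av (x - (u j + a j ^ p * e))) (av (x - (u i + a i ^ p * e)))"
      using avtri_diff[of "u i + a i ^ p * e" "u j + a j ^ p * e" x] by (simp add: avminus max.commute)
    also have "\<dots> \<le> max (1 / real (Suc i)) (1 / real (Suc j))"
      using w[of i] w[of j] by (simp add: max_def)
    finally have "av ((a i - a j) ^ p * e) \<le> T * max (1 / real (Suc i)) (1 / real (Suc j))"
      using T by (simp add: mult_left_mono)
    then have "av (a i - a j) ^ p * av e \<le> T * max (1 / real (Suc i)) (1 / real (Suc j))"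
      by (simp add: avmult avpow)
    then show ?thesis using e by (simp add: field_simps)
  qed
  obtain L where L: "\<forall>\<epsilon>>0. \<exists>N. \<forall>n\<ge>N. av (a n - L) ^ p < \<epsilon>"
    using cauchy_seq[OF _ ca] T e by (meson divide_pos_pos)
  have "x - L ^ p * e \<in> W" using W(2) unfolding closedk_def
  proof (elim allE impE)
    show "\<forall>\<epsilon>>0. \<exists>w\<in>W. av (x - L ^ p * e - w) < \<epsilon>"
    proof (intro allI impI)
      fix \<epsilon> :: real assume eps: "\<epsilon> > 0"
      obtain N1 where N1: "\<forall>n\<ge>N1. av (a n - L) ^ p < \<epsilon> / av e" using L eps e by (meson divide_pos_pos)
      obtain N2 where N2: "inverse (real (Suc N2)) < \<epsilon>" using reals_Archimedean[OF eps] by blast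
      define j where "j = max N1 N2"
      have eqx: "x - L ^ p * e - u j = (x - (u j + a j ^ p * e)) + (a j - L) ^ p * e"
        by (simp add: frob_diff algebra_simps)
      have "av (x - L ^ p * e - u j) \<le> max (av (x - (u j + a j ^ p * e))) (av ((a j - L) ^ p * e))"
        unfolding eqx by (rule avtri)
      also have "\<dots> < \<epsilon>"
      proof -
        have "av (x - (u j + a j ^ p * e)) < 1 / real (Suc j)" by (rule w)
        also have "1 / real (Suc j) \<le> 1 / real (Suc N2)" unfolding j_def by (simp add: frac_le)
        also have "\<dots> < \<epsilon>" using N2 by (simp add: inverse_eq_divide)
        finally have 1: "av (x - (u j + a j ^ p * e)) < \<epsilon>" .
        have "av (a j - L) ^ p < \<epsilon> / av e" using N1 unfolding j_def by simp
        then have 2: "av ((a j - L) ^ p * e) < \<epsilon>" using e by (simp add: avmult avpow field_simps)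
        show ?thesis using 1 2 by simp
      qed
      finally show "\<exists>w\<in>W. av (x - L ^ p * e - w) < \<epsilon>" using u by blast
    qed
  qed
  then have "x = (x - L ^ p * e) + L ^ p * e" by simp
  then show "x \<in> {u + a ^ p * e |u a. u \<in> W}" using \<open>x - L ^ p * e \<in> W\<close> by blast
qed

lemma sub_ext: "sub p (H::'k set) \<Longrightarrow> sub p (ext p H e)"
  unfolding sub_def ext_def
proof (intro conjI ballI allI)
  assume H: "0 \<in> H \<and> (\<forall>x\<in>H. \<forall>y\<in>H. x + y \<in> H) \<and> (\<forall>c. \<forall>x\<in>H. c ^ p * x \<in> H)"
  show "0 \<in> {h + s ^ p * e |h s. h \<in> H}" using H ppos
    by (intro CollectI exI[of _ 0]) (auto simp: power_0_left)
next
  fix x x' assume H: "0 \<in> H \<and> (\<forall>x\<in>H. \<forall>y\<in>H. x + y \<in> H) \<and> (\<forall>c. \<forall>x\<in>H. c ^ p * x \<in> H)"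
    and "x \<in> {h + s ^ p * e |h s. h \<in> H}" "x' \<in> {h + s ^ p * e |h s. h \<in> H}"
  then obtain h s h' s' where "h \<in> H" "x = h + s ^ p * e" "h' \<in> H" "x' = h' + s' ^ p * e" by blast
  moreover have "x + x' = (h + h') + (s + s') ^ p * e" using calculation by (simp add: frob_add algebra_simps)
  ultimately show "x + x' \<in> {h + s ^ p * e |h s. h \<in> H}" using H by blast
next
  fix c x assume H: "0 \<in> H \<and> (\<forall>x\<in>H. \<forall>y\<in>H. x + y \<in> H) \<and> (\<forall>c. \<forall>x\<in>H. c ^ p * x \<in> H)"
    and "x \<in> {h + s ^ p * e |h s. h \<in> H}"
  then obtain h s where "h \<in> H" "x = h + s ^ p * e" by blast
  moreover have "c ^ p * x = c ^ p * h + (c * s) ^ p * e" using calculation by (simp add: algebra_simps power_mult_distrib)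
  ultimately show "c ^ p * x \<in> {h + s ^ p * e |h s. h \<in> H}" using H by blast
qed

lemma sub_ext_mono: "H \<subseteq> ext p H e"
  unfolding ext_def using ppos by (force simp: power_0_left)

lemma Wof_ext: "Wof p (ext p H e) = {u + a ^ p * e | u a. u \<in> Wof p H}"
proof
  show "Wof p (ext p H e) \<subseteq> {u + a ^ p * e | u a. u \<in> Wof p H}"
  proof
    fix x assume "x \<in> Wof p (ext p H e)"
    then obtain c h s where "h \<in> H" "x = c ^ p + (h + s ^ p * e)" unfolding Wof_def ext_def by blast
    then have "x = (c ^ p + h) + s ^ p * e" "c ^ p + h \<in> Wof p H" unfolding Wof_def by (auto simp: add.assoc)
    then show "x \<in> {u + a ^ p * e | u a. u \<in> Wof p H}" by blast
  qed
  show "{u + a ^ p * e | u a. u \<in> Wof p H} \<subseteq> Wof p (ext p H e)"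
  proof
    fix x assume "x \<in> {u + a ^ p * e | u a. u \<in> Wof p H}"
    then obtain c h s where "h \<in> H" "x = (c ^ p + h) + s ^ p * e" unfolding Wof_def by blast
    then have "x = c ^ p + (h + s ^ p * e)" "h + s ^ p * e \<in> ext p H e" unfolding ext_def by (auto simp: add.assoc)
    then show "x \<in> Wof p (ext p H e)" unfolding Wof_def by blast
  qed
qed

lemma step:
  assumes H: "sub p (H::'k set)" and D: "D > 0" "orth av p D H" and cl: "closedk av (Wof p H)"
    and b: "b \<notin> Wof p H" and T: "T > 1"
  shows "\<exists>e. sub p (ext p H e) \<and> orth av p (D / T) (ext p H e) \<and> closedk av (Wof p (ext p H e))
           \<and> b \<in> Wof p (ext p H e) \<and> H \<subseteq> ext p H e"
proof -
  let ?W = "Wof p H"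
  have W: "sub p ?W" using sub_Wof[OF H] .
  define \<rho> where "\<rho> = Inf ((\<lambda>w. av (b - w)) ` ?W)"
  have W0: "0 \<in> ?W" using W unfolding sub_def by blast
  have bdd: "bdd_below ((\<lambda>w. av (b - w)) ` ?W)" unfolding bdd_below_def using avge by blast
  have \<rho>le: "\<rho> \<le> av (b - w)" if "w \<in> ?W" for w unfolding \<rho>_def using bdd that by (intro cInf_lower) auto
  have \<rho>less: "\<exists>w\<in>?W. av (b - w) < v" if "\<rho> < v" for v
    using cInf_lessD[of "(\<lambda>w. av (b - w)) ` ?W" v] that W0 unfolding \<rho>_def by auto
  have \<rho>pos: "\<rho> > 0"
  proof (rule ccontr)
    assume "\<not> \<rho> > 0"
    then have "\<forall>\<epsilon>>0. \<exists>w\<in>?W. av (b - w) < \<epsilon>" using \<rho>less by force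
    then have "b \<in> ?W" using cl unfolding closedk_def by blast
    then show False using b by simp
  qed
  obtain w0 where w0: "w0 \<in> ?W" "av (b - w0) < T * \<rho>" using \<rho>less[of "T * \<rho>"] \<rho>pos T by auto
  define e where "e = b - w0"
  have ege: "av e \<ge> \<rho>" unfolding e_def using \<rho>le[OF w0(1)] .
  have epos: "av e > 0" using ege \<rho>pos by simp
  have key: "av (a ^ p * e) \<le> T * av (u + a ^ p * e)" if u: "u \<in> ?W" for u a
  proof (cases "a = 0")
    case True then show ?thesis using T ppos avge by (simp add: power_0_left av0)
  next
    case False
    have inv: "a ^ p * inverse a ^ p = 1" using False by (simp add: power_mult_distrib[symmetric])
    have mem: "w0 - inverse a ^ p * u \<in> ?W"
      using sub_diff[OF W w0(1)] W u unfolding sub_def by blast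
    have "u + a ^ p * e = a ^ p * (b - (w0 - inverse a ^ p * u))"
    proof -
      have "a ^ p * (b - (w0 - inverse a ^ p * u)) = a ^ p * (b - w0) + (a ^ p * inverse a ^ p) * u"
        by (simp add: algebra_simps)
      then show ?thesis unfolding inv e_def by simp
    qed
    then have "av (u + a ^ p * e) = av a ^ p * av (b - (w0 - inverse a ^ p * u))" by (simp add: avmult avpow)
    also have "\<dots> \<ge> av a ^ p * \<rho>" using \<rho>le[OF mem] avge by (simp add: mult_left_mono)
    finally have 1: "av a ^ p * \<rho> \<le> av (u + a ^ p * e)" .
    have "av (a ^ p * e) = av a ^ p * av e" by (simp add: avmult avpow)
    also have "\<dots> \<le> av a ^ p * (T * \<rho>)" using w0(2) avge unfolding e_def by (simp add: mult_left_mono less_imp_le)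
    also have "\<dots> = T * (av a ^ p * \<rho>)" by simp
    also have "\<dots> \<le> T * av (u + a ^ p * e)" using 1 T by simp
    finally show ?thesis .
  qed
  have key2: "av u \<le> T * av (u + a ^ p * e)" if u: "u \<in> ?W" for u a
  proof -
    have "av u \<le> max (av (u + a ^ p * e)) (av (a ^ p * e))"
      using avdiff_le[of "u + a ^ p * e" "a ^ p * e"] by simp
    also have "\<dots> \<le> T * av (u + a ^ p * e)"
      using key[OF u, of a] T avge[of "u + a ^ p * e"] by (simp add: less_imp_le mult_le_cancel_right1)
    finally show ?thesis .
  qed
  have 1: "sub p (ext p H e)" by (rule sub_ext[OF H])
  have 2: "orth av p (D / T) (ext p H e)" unfolding orth_def
  proof (intro allI ballI)
    fix c x assume "x \<in> ext p H e"
    then obtain h s where hs: "h \<in> H" "x = h + s ^ p * e" unfolding ext_def by blast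
    have u: "c ^ p + h \<in> ?W" using hs(1) unfolding Wof_def by blast
    have "D * av c ^ p \<le> av (c ^ p + h)" using D(2) hs(1) unfolding orth_def by blast
    also have "\<dots> \<le> T * av (c ^ p + x)" using key2[OF u, of s] hs(2) by (simp add: add.assoc)
    finally show "D / T * av c ^ p \<le> av (c ^ p + x)" using T by (simp add: field_simps)
  qed
  have 3: "closedk av (Wof p (ext p H e))"
    unfolding Wof_ext using closed_step[OF W cl epos, of T] key T by simp
  have 4: "b \<in> Wof p (ext p H e)"
  proof -
    have "b = w0 + 1 ^ p * e" unfolding e_def by simp
    then show ?thesis unfolding Wof_ext using w0(1) by blast
  qed
  show ?thesis using 1 2 3 4 sub_ext_mono by blast
qed

end

definition Dm :: "nat \<Rightarrow> real" where "Dm m = 1 / 2 + 1 / real (m + 2)"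

definition goodE :: "('k::field \<Rightarrow> real) \<Rightarrow> nat \<Rightarrow> 'k set \<Rightarrow> 'k \<Rightarrow> real \<Rightarrow> 'k \<Rightarrow> bool" where
  "goodE av p H b D e \<longleftrightarrow> sub p (ext p H e) \<and> orth av p D (ext p H e) \<and> closedk av (Wof p (ext p H e))
     \<and> b \<in> Wof p (ext p H e) \<and> H \<subseteq> ext p H e"

primrec Hs :: "('k::field \<Rightarrow> real) \<Rightarrow> nat \<Rightarrow> (nat \<Rightarrow> 'k) \<Rightarrow> nat \<Rightarrow> 'k set" where
  "Hs av p bs 0 = {0}"
| "Hs av p bs (Suc m) = (if bs m \<in> Wof p (Hs av p bs m) then Hs av p bs m
     else ext p (Hs av p bs m) (SOME e. goodE av p (Hs av p bs m) (bs m) (Dm (Suc m)) e))"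

lemma Dm_pos: "Dm m > 0" unfolding Dm_def by (simp add: add_pos_pos)
lemma Dm_ge: "Dm m \<ge> 1 / 2" unfolding Dm_def by simp
lemma Dm_0: "Dm 0 = 1" unfolding Dm_def by simp
lemma Dm_dec: "Dm (Suc m) < Dm m" unfolding Dm_def by (simp add: frac_less2)

context naf
begin

lemma orth_mono: "D' \<le> D \<Longrightarrow> orth av p D H \<Longrightarrow> orth av p D' H"
proof -
  assume a: "D' \<le> D" "orth av p D H"
  show "orth av p D' H" unfolding orth_def
  proof (intro allI ballI)
    fix c h assume "h \<in> H"
    then have "D * av c ^ p \<le> av (c ^ p + h)" using a(2) unfolding orth_def by blast
    moreover have "D' * av c ^ p \<le> D * av c ^ p" using a(1) avge by (simp add: mult_right_mono)
    ultimately show "D' * av c ^ p \<le> av (c ^ p + h)" by simp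
  qed
qed

lemma closedk_Wof0: "closedk av (Wof p ({0}::'k set))"
proof -
  have c0: "closedk av ({0}::'k set)" unfolding closedk_def
  proof (intro allI impI)
    fix x :: 'k assume h: "\<forall>e>0. \<exists>w\<in>{0}. av (x - w) < e"
    show "x \<in> {0}"
    proof (rule ccontr)
      assume "x \<notin> {0}" then have "av x > 0" using avpos by simp
      then show False using h by force
    qed
  qed
  have "closedk av {u + a ^ p * 1 | u a. u \<in> ({0}::'k set)}"
    by (rule closed_step[OF sub_zero c0, of 1 1]) (simp_all add: av1)
  moreover have "{u + a ^ p * 1 | u a. u \<in> ({0}::'k set)} = Wof p {0}" unfolding Wof_def by auto
  ultimately show ?thesis by simp
qed

lemma Hs_inv: "sub p (Hs av p bs m) \<and> orth av p (Dm m) (Hs av p bs m) \<and> closedk av (Wof p (Hs av p bs m))"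
proof (induction m)
  case 0 then show ?case using sub_zero orth_zero closedk_Wof0 by (simp add: Dm_0)
next
  case (Suc m)
  show ?case
  proof (cases "bs m \<in> Wof p (Hs av p bs m)")
    case True
    have "orth av p (Dm m) (Hs av p bs m)" using Suc.IH by blast
    then have "orth av p (Dm (Suc m)) (Hs av p bs m)"
      by (rule orth_mono[OF less_imp_le[OF Dm_dec[of m]]])
    moreover have "Hs av p bs (Suc m) = Hs av p bs m" using True by simp
    ultimately show ?thesis using Suc.IH by simp
  next
    case False
    have T: "Dm m / Dm (Suc m) > 1" using Dm_dec[of m] Dm_pos[of "Suc m"] by (simp add: less_divide_eq_1_pos)
    have eq: "Dm m / (Dm m / Dm (Suc m)) = Dm (Suc m)" using Dm_pos[of m] Dm_pos[of "Suc m"] by (simp add: divide_divide_eq_right)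
    have i: "sub p (Hs av p bs m)" "orth av p (Dm m) (Hs av p bs m)" "closedk av (Wof p (Hs av p bs m))"
      using Suc by blast+
    have "\<exists>e. goodE av p (Hs av p bs m) (bs m) (Dm (Suc m)) e"
      using step[OF i(1) Dm_pos[of m] i(2) i(3) False T] unfolding goodE_def eq .
    define e0 where "e0 = (SOME e. goodE av p (Hs av p bs m) (bs m) (Dm (Suc m)) e)"
    have G: "goodE av p (Hs av p bs m) (bs m) (Dm (Suc m)) e0"
      unfolding e0_def by (rule someI_ex) fact
    have "Hs av p bs (Suc m) = ext p (Hs av p bs m) e0" using False by (simp add: e0_def)
    then show ?thesis using G unfolding goodE_def by simp
  qed
qed

lemma Hs_step: "bs m \<in> Wof p (Hs av p bs (Suc m)) \<and> Hs av p bs m \<subseteq> Hs av p bs (Suc m)"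
proof (cases "bs m \<in> Wof p (Hs av p bs m)")
  case True
  then have "Hs av p bs (Suc m) = Hs av p bs m" by simp
  then show ?thesis using True by simp
next
  case False
  have T: "Dm m / Dm (Suc m) > 1" using Dm_dec[of m] Dm_pos[of "Suc m"] by (simp add: less_divide_eq_1_pos)
  have eq: "Dm m / (Dm m / Dm (Suc m)) = Dm (Suc m)" using Dm_pos[of m] Dm_pos[of "Suc m"] by (simp add: divide_divide_eq_right)
  have i: "sub p (Hs av p bs m)" "orth av p (Dm m) (Hs av p bs m)" "closedk av (Wof p (Hs av p bs m))"
    using Hs_inv[of bs m] by blast+
  have "\<exists>e. goodE av p (Hs av p bs m) (bs m) (Dm (Suc m)) e"
    using step[OF i(1) Dm_pos[of m] i(2) i(3) False T] unfolding goodE_def eq .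
  define e0 where "e0 = (SOME e. goodE av p (Hs av p bs m) (bs m) (Dm (Suc m)) e)"
  have G: "goodE av p (Hs av p bs m) (bs m) (Dm (Suc m)) e0"
    unfolding e0_def by (rule someI_ex) fact
  have "Hs av p bs (Suc m) = ext p (Hs av p bs m) e0" using False by (simp add: e0_def)
  then show ?thesis using G unfolding goodE_def by simp
qed

lemma Hs_mono: "m \<le> m' \<Longrightarrow> Hs av p bs m \<subseteq> Hs av p bs m'"
proof -
  assume "m \<le> m'"
  moreover have "\<And>k. Hs av p bs k \<subseteq> Hs av p bs (Suc k)" using Hs_step by blast
  ultimately show ?thesis by (rule lift_Suc_mono_le[of "Hs av p bs", rotated])
qed

lemma sub_sum:
  assumes W: "sub p (W::'k set)"
  shows "finite F \<Longrightarrow> F \<subseteq> W \<Longrightarrow> (\<Sum>b\<in>F. c b ^ p * b) \<in> W"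
proof (induction F rule: finite_induct)
  case empty then show ?case using W unfolding sub_def by simp
next
  case (insert x F)
  then have "c x ^ p * x \<in> W" "(\<Sum>b\<in>F. c b ^ p * b) \<in> W" using W unfolding sub_def by auto
  then show ?case using insert W unfolding sub_def by simp
qed

lemma Wof_mono: "H \<subseteq> H' \<Longrightarrow> Wof p H \<subseteq> Wof p H'"
  unfolding Wof_def by blast

lemma cnt_lam:
  assumes "rootp_dense_countable_basis av p"
  shows "\<exists>lam. good_lam av p lam"
proof -
  obtain V B where V': "rootp_subspace p V \<and> rootp_dense av p V \<and>
            countable B \<and> B \<subseteq> V \<and> rootp_lin_indep p B \<and> rootp_span p B = V"
    using assms unfolding rootp_dense_countable_basis_def by (elim exE) (rule that)
  then have V: "rootp_dense av p V" "countable B" "rootp_span p B = V" by simp_all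
  define bs where "bs = from_nat_into (insert 0 B)"
  have rbs: "range bs = insert 0 B" unfolding bs_def using V(2) by (simp add: range_from_nat_into)
  define Hinf where "Hinf = (\<Union>m. Hs av p bs m)"
  have Hinf_sub: "sub p Hinf" unfolding sub_def
  proof (intro conjI ballI allI)
    show "0 \<in> Hinf" unfolding Hinf_def using Hs.simps(1)[of av p bs] by blast
  next
    fix x y assume "x \<in> Hinf" "y \<in> Hinf"
    then obtain m m' where xy: "x \<in> Hs av p bs m" "y \<in> Hs av p bs m'" unfolding Hinf_def by blast
    then have "x \<in> Hs av p bs (max m m')" "y \<in> Hs av p bs (max m m')"
      using Hs_mono[of m "max m m'" bs] Hs_mono[of m' "max m m'" bs] by auto
    moreover have "sub p (Hs av p bs (max m m'))" using Hs_inv by blast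
    ultimately have "x + y \<in> Hs av p bs (max m m')" unfolding sub_def by blast
    then show "x + y \<in> Hinf" unfolding Hinf_def by blast
  next
    fix c x assume "x \<in> Hinf"
    then obtain m where "x \<in> Hs av p bs m" unfolding Hinf_def by blast
    moreover have "sub p (Hs av p bs m)" using Hs_inv by blast
    ultimately have "c ^ p * x \<in> Hs av p bs m" unfolding sub_def by blast
    then show "c ^ p * x \<in> Hinf" unfolding Hinf_def by blast
  qed
  have Hinf_orth: "orth av p (1 / 2) Hinf" unfolding orth_def
  proof (intro allI ballI)
    fix c h assume "h \<in> Hinf"
    then obtain m where m: "h \<in> Hs av p bs m" unfolding Hinf_def by blast
    have "orth av p (Dm m) (Hs av p bs m)" using Hs_inv by blast
    then have "orth av p (1 / 2) (Hs av p bs m)" by (rule orth_mono[OF Dm_ge])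
    then show "1 / 2 * av c ^ p \<le> av (c ^ p + h)" using m unfolding orth_def by blast
  qed
  have WS: "sub p (Wof p Hinf)" by (rule sub_Wof[OF Hinf_sub])
  have bsW: "bs m \<in> Wof p Hinf" for m
  proof -
    have "bs m \<in> Wof p (Hs av p bs (Suc m))" using Hs_step[of bs m] by (rule conjunct1)
    moreover have "Hs av p bs (Suc m) \<subseteq> Hinf" unfolding Hinf_def by blast
    ultimately show ?thesis using Wof_mono by blast
  qed
  have BW: "B \<subseteq> Wof p Hinf"
  proof
    fix b assume "b \<in> B"
    then have "b \<in> range bs" using rbs by simp
    then obtain m where "b = bs m" by blast
    then show "b \<in> Wof p Hinf" using bsW by simp
  qed
  have VW: "V \<subseteq> Wof p Hinf"
  proof
    fix v assume "v \<in> V"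
    then obtain F a where Fa: "v = (\<Sum>b\<in>F. rootp_smult p (a b) b)" "finite F" "F \<subseteq> B"
      using V(3) unfolding rootp_span_def by blast
    have "F \<subseteq> Wof p Hinf" using Fa(3) BW by (rule order_trans)
    then have "(\<Sum>b\<in>F. a b ^ p * b) \<in> Wof p Hinf" by (rule sub_sum[OF WS Fa(2)])
    then show "v \<in> Wof p Hinf" unfolding Fa(1) rootp_smult_def .
  qed
  define Hb where "Hb = {y. \<forall>\<epsilon>>0. \<exists>h\<in>Hinf. av (y - h) < \<epsilon>}"
  have Hinf_Hb: "Hinf \<subseteq> Hb"
  proof
    fix x assume x: "x \<in> Hinf"
    have "\<forall>\<epsilon>>0. \<exists>h\<in>Hinf. av (x - h) < \<epsilon>"
    proof (intro allI impI)
      fix \<epsilon> :: real assume "\<epsilon> > 0" then have "av (x - x) < \<epsilon>" using av0 by simp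
      then show "\<exists>h\<in>Hinf. av (x - h) < \<epsilon>" using x by blast
    qed
    then show "x \<in> Hb" unfolding Hb_def by blast
  qed
  have Hb0: "0 \<in> Hb" using Hinf_Hb Hinf_sub unfolding sub_def by blast
  have Hb_sub: "sub p Hb" unfolding sub_def
  proof (intro conjI ballI allI)
    show "0 \<in> Hb" using Hinf_Hb Hinf_sub unfolding sub_def by blast
  next
    fix x y assume xy: "x \<in> Hb" "y \<in> Hb"
    show "x + y \<in> Hb" unfolding Hb_def
    proof (intro CollectI allI impI)
      fix \<epsilon> :: real assume e: "\<epsilon> > 0"
      obtain h1 where h1: "h1 \<in> Hinf" "av (x - h1) < \<epsilon>" using xy(1) e unfolding Hb_def by blast
      obtain h2 where h2: "h2 \<in> Hinf" "av (y - h2) < \<epsilon>" using xy(2) e unfolding Hb_def by blast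
      have "av (x + y - (h1 + h2)) \<le> max (av (x - h1)) (av (y - h2))"
        using avtri[of "x - h1" "y - h2"] by (simp add: algebra_simps)
      then have "av (x + y - (h1 + h2)) < \<epsilon>" using h1 h2 by simp
      moreover have "h1 + h2 \<in> Hinf" using Hinf_sub h1 h2 unfolding sub_def by blast
      ultimately show "\<exists>h\<in>Hinf. av (x + y - h) < \<epsilon>" by blast
    qed
  next
    fix c x assume x: "x \<in> Hb"
    show "c ^ p * x \<in> Hb"
    proof (cases "c = 0")
      case True then show ?thesis using ppos Hb0 by (simp add: power_0_left)
    next
      case False
      show ?thesis unfolding Hb_def
      proof (intro CollectI allI impI)
        fix \<epsilon> :: real assume e: "\<epsilon> > 0"
        have cp: "av c ^ p > 0" using avpos[OF False] by simp
        have "\<epsilon> / av c ^ p > 0" using e cp by simp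
        then obtain h where h: "h \<in> Hinf" "av (x - h) < \<epsilon> / av c ^ p" using x unfolding Hb_def by blast
        have "av (c ^ p * x - c ^ p * h) = av c ^ p * av (x - h)"
          by (simp add: avmult avpow right_diff_distrib[symmetric])
        also have "\<dots> < \<epsilon>" using h(2) cp by (simp add: field_simps)
        finally show "\<exists>h\<in>Hinf. av (c ^ p * x - h) < \<epsilon>"
          using Hinf_sub h(1) unfolding sub_def by blast
      qed
    qed
  qed
  have Hb_orth: "orth av p (1 / 2) Hb" unfolding orth_def
  proof (intro allI ballI)
    fix c y assume y: "y \<in> Hb"
    show "1 / 2 * av c ^ p \<le> av (c ^ p + y)"
    proof (cases "c = 0")
      case True then show ?thesis using ppos avge[of y] by (simp add: power_0_left av0)
    next
      case False
      define \<delta> where "\<delta> = 1 / 2 * av c ^ p"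
      have d: "\<delta> > 0" unfolding \<delta>_def using avpos[OF False] by simp
      obtain h where h: "h \<in> Hinf" "av (y - h) < \<delta>" using y d unfolding Hb_def by blast
      have "\<delta> \<le> av (c ^ p + h)" unfolding \<delta>_def using Hinf_orth h(1) unfolding orth_def by blast
      also have "c ^ p + h = (c ^ p + y) - (y - h)" by simp
      also have "av \<dots> \<le> max (av (c ^ p + y)) (av (y - h))" by (rule avdiff_le)
      finally have "\<delta> \<le> max (av (c ^ p + y)) (av (y - h))" .
      then show ?thesis using h(2) unfolding \<delta>_def by (simp add: le_max_iff_disj)
    qed
  qed
  have allW: "y \<in> Wof p Hb" for y
  proof -
    have "\<forall>j. \<exists>ch. snd ch \<in> Hinf \<and> av (y - (fst ch ^ p + snd ch)) < 1 / real (Suc j)"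
    proof
      fix j
      have pos: "(1 / real (Suc j)) powr (1 / real p) > 0" by simp
      obtain v where v: "v \<in> V" "rootp_norm av p (y - v) < (1 / real (Suc j)) powr (1 / real p)"
        using V(1) pos unfolding rootp_dense_def by blast
      have "av (y - v) < 1 / real (Suc j)"
      proof (rule ccontr)
        assume "\<not> av (y - v) < 1 / real (Suc j)"
        then have "(1 / real (Suc j)) powr (1 / real p) \<le> av (y - v) powr (1 / real p)"
          by (intro powr_mono2) auto
        then show False using v(2) unfolding rootp_norm_def by simp
      qed
      moreover obtain c h where "h \<in> Hinf" "v = c ^ p + h" using VW v(1) unfolding Wof_def by blast
      ultimately show "\<exists>ch. snd ch \<in> Hinf \<and> av (y - (fst ch ^ p + snd ch)) < 1 / real (Suc j)"
        by (intro exI[of _ "(c, h)"]) simp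
    qed
    then obtain F where F: "\<And>j. snd (F j) \<in> Hinf" "\<And>j. av (y - (fst (F j) ^ p + snd (F j))) < 1 / real (Suc j)"
      using choice[of "\<lambda>j ch. snd ch \<in> Hinf \<and> av (y - (fst ch ^ p + snd ch)) < 1 / real (Suc j)"] by blast
    define c where "c j = fst (F j)" for j
    define h where "h j = snd (F j)" for j
    have hH: "h j \<in> Hinf" for j using F(1) unfolding h_def by simp
    have cl: "av (y - (c j ^ p + h j)) < 1 / real (Suc j)" for j using F(2) unfolding c_def h_def by simp
    have ca: "av (c i - c j) ^ p \<le> 2 * max (1 / real (Suc i)) (1 / real (Suc j))" for i j
    proof -
      have "h i - h j \<in> Hinf" using sub_diff[OF Hinf_sub hH hH] .
      then have "1 / 2 * av (c i - c j) ^ p \<le> av ((c i - c j) ^ p + (h i - h j))"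
        using Hinf_orth unfolding orth_def by blast
      also have "(c i - c j) ^ p + (h i - h j) = (y - (c j ^ p + h j)) - (y - (c i ^ p + h i))"
        by (simp add: frob_diff algebra_simps)
      also have "av \<dots> \<le> max (av (y - (c j ^ p + h j))) (av (y - (c i ^ p + h i)))" by (rule avdiff_le)
      also have "\<dots> \<le> max (1 / real (Suc i)) (1 / real (Suc j))" using cl[of i] cl[of j] by (simp add: max_def)
      finally show ?thesis by simp
    qed
    obtain L where L: "\<forall>\<epsilon>>0. \<exists>N. \<forall>n\<ge>N. av (c n - L) ^ p < \<epsilon>"
      using cauchy_seq[of 2 c, OF _ ca] by auto
    have "y - L ^ p \<in> Hb" unfolding Hb_def
    proof (intro CollectI allI impI)
      fix \<epsilon> :: real assume eps: "\<epsilon> > 0"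
      obtain N1 where N1: "\<forall>n\<ge>N1. av (c n - L) ^ p < \<epsilon>" using L eps by blast
      obtain N2 where N2: "inverse (real (Suc N2)) < \<epsilon>" using reals_Archimedean[OF eps] by blast
      define j where "j = max N1 N2"
      have eqx: "y - L ^ p - h j = (y - (c j ^ p + h j)) + (c j - L) ^ p"
        by (simp add: frob_diff algebra_simps)
      have "av (y - L ^ p - h j) \<le> max (av (y - (c j ^ p + h j))) (av ((c j - L) ^ p))"
        unfolding eqx by (rule avtri)
      also have "\<dots> < \<epsilon>"
      proof -
        have "av (y - (c j ^ p + h j)) < 1 / real (Suc j)" by (rule cl)
        also have "1 / real (Suc j) \<le> 1 / real (Suc N2)" unfolding j_def by (simp add: frac_le)
        also have "\<dots> < \<epsilon>" using N2 by (simp add: inverse_eq_divide)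
        finally have 1: "av (y - (c j ^ p + h j)) < \<epsilon>" .
        have 2: "av ((c j - L) ^ p) < \<epsilon>" using N1 unfolding j_def by (simp add: avpow)
        show ?thesis using 1 2 by simp
      qed
      finally show "\<exists>h\<in>Hinf. av (y - L ^ p - h) < \<epsilon>" using hH by blast
    qed
    moreover have "y = L ^ p + (y - L ^ p)" by simp
    ultimately show ?thesis unfolding Wof_def by blast
  qed
  show ?thesis by (rule lemmaL[OF Hb_sub _ Hb_orth allW]) simp
qed

end

theorem corollaryD:
  fixes av :: "'k::field \<Rightarrow> real" and p n :: nat
  assumes "nonarch_abs av" and "av_complete av" and "nontrivial_value_group av"
    and "CHAR('k) = p" and "p > 0"
    and "n > 0"
    and "spherically_complete av
         \<or> rootp_dense_countable_basis av p
         \<or> (\<not> discrete_value_group av \<and> rootp_polar av p)"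
  shows "frobenius_split (tate_algebra av n) p"
proof -
  interpret naf av p using assms(1,2,4,5) by unfold_locales
  have "\<exists>lam. good_lam av p lam"
    using assms(7) sph_lam cnt_lam polar_lam[OF assms(3)] by blast
  then obtain lam where "good_lam av p lam" by blast
  then show ?thesis using split_from_lam[OF assms(1,4,5)] by blast
qed

end
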